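(* Let $\mathscr{VC}$ denote the set of concordance classes of long virtual knots. Then $\mathscr{VC}$, equipped with the operation induced by concatenation $\#$ and with identity element the class of the trivial long knot $1$, is a group.
   Context: A long virtual knot is an immersion $\mathbb{R}\to\mathbb{R}^2$ that coincides with the $x$-axis outside a compact set, whose double points are each marked as a classical crossing (with over/under information) or a virtual crossing, oriented from $-\infty$ to $+\infty$, considered up to the extended Reidemeister moves (the classical Reidemeister moves together with the detour move). A long virtual link is a virtual link diagram in which exactly one component is a long virtual knot and the remaining components are closed. The trivial long knot $1$ is the $x$-axis. For long virtual knots $K_1,K_2$, the concatenation $K_1\#K_2$ is obtained by drawing $K_2$ to the right of $K_1$. Concordance: two long virtual knots $K_1,K_2$ are concordant, written $K_1\asymp K_2$, if one can be obtained from the other by extended Reidemeister moves together with a finite sequence of births (adding a disjoint trivial circle with no crossings), deaths (removing such a circle) and saddles (replacing, in a small disk, two oppositely oriented parallel arcs $)\,($ by the two arcs $\smile$ over $\frown$, or conversely, respecting orientations), where the numbers $\#b,\#s,\#d$ of births, saddles and deaths satisfy $\#b-\#s+\#d=0$ (intermediate stages are long virtual links). Concatenation respects concordance: if $L_1\asymp R_1$ and $L_2\asymp R_2$ then $L_1\#L_2\asymp R_1\#R_2$. *)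

theory Defs
  imports "HOL-Combinatorics.Transposition" "HOL-Combinatorics.Permutations" "HOL-Algebra.Group"
begin

text \<open>
A long virtual link diagram is encoded by its Gauss diagram (Goussarov-Polyak-Viro).
The cores of the components are described by a finite set of marked points on them
(gpts) together with the successor map gnxt (a permutation of gpts; every cycle is a
component).  The point 0 is the point at infinity: the cycle through 0 is the long
component, cut open at 0.  A classical crossing is recorded at its over-passing point
x by gund x = Some y, where y is the under-passing point, and gpos x is its sign
(True = positive).  Points that are not ends of crossings are plain marker points;
a closed component without crossings is a cycle of plain points.  Virtual crossings
are not recorded (they are invisible in Gauss diagrams).
\<close>

record gdiag =
  gpts :: "nat set"
  gnxt :: "nat \<Rightarrow> nat"
  gund :: "nat \<Rightarrow> nat option"
  gpos :: "nat \<Rightarrow> bool"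

definition wf_gd :: "gdiag \<Rightarrow> bool" where
  "wf_gd D \<longleftrightarrow> finite (gpts D) \<and> 0 \<in> gpts D \<and> gnxt D permutes gpts D
     \<and> dom (gund D) \<subseteq> gpts D - {0} \<and> ran (gund D) \<subseteq> gpts D - {0}
     \<and> inj_on (gund D) (dom (gund D)) \<and> dom (gund D) \<inter> ran (gund D) = {}"

definition long_knot :: "gdiag \<Rightarrow> bool" where
  "long_knot D \<longleftrightarrow> wf_gd D \<and> (\<forall>x\<in>gpts D. \<exists>n. (gnxt D ^^ n) 0 = x)"

definition triv_long :: gdiag where
  "triv_long = \<lparr>gpts = {0}, gnxt = id, gund = (\<lambda>_. None), gpos = (\<lambda>_. True)\<rparr>"

definition gd_iso :: "gdiag \<Rightarrow> gdiag \<Rightarrow> bool" where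
  "gd_iso D E \<longleftrightarrow> (\<exists>f. bij f \<and> f 0 = 0 \<and> f ` gpts D = gpts E \<and>
     (\<forall>x\<in>gpts D. gnxt E (f x) = f (gnxt D x) \<and> gund E (f x) = map_option f (gund D x)
        \<and> (gund D x \<noteq> None \<longrightarrow> gpos E (f x) = gpos D x)))"

text \<open>Insertion of a plain marker point after the point x (bookkeeping only).\<close>
definition ins_plain :: "gdiag \<Rightarrow> gdiag \<Rightarrow> bool" where
  "ins_plain D E \<longleftrightarrow> (\<exists>x p. x \<in> gpts D \<and> p \<notin> gpts D \<and>
     E = D\<lparr>gpts := insert p (gpts D), gnxt := (gnxt D)(x := p, p := gnxt D x)\<rparr>)"

text \<open>R1 (removing a kink): a crossing whose two ends are consecutive.\<close>
definition gd_R1 :: "gdiag \<Rightarrow> gdiag \<Rightarrow> bool" where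
  "gd_R1 D E \<longleftrightarrow> (\<exists>x y. gund D x = Some y \<and> (gnxt D x = y \<or> gnxt D y = x) \<and>
     E = D\<lparr>gund := (gund D)(x := None)\<rparr>)"

text \<open>R2 (removing a bigon): two crossings of opposite signs whose over-ends are
  consecutive on one strand and whose under-ends are consecutive (in either order,
  i.e. parallel or antiparallel strands) on another.\<close>
definition gd_R2 :: "gdiag \<Rightarrow> gdiag \<Rightarrow> bool" where
  "gd_R2 D E \<longleftrightarrow> (\<exists>x1 x2 y1 y2. gund D x1 = Some y1 \<and> gund D x2 = Some y2 \<and>
     gnxt D x1 = x2 \<and> (gnxt D y1 = y2 \<or> gnxt D y2 = y1) \<and> gpos D x1 \<noteq> gpos D x2 \<and>
     E = D\<lparr>gund := (gund D)(x1 := None, x2 := None)\<rparr>)"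

definition gd_adj :: "gdiag \<Rightarrow> bool \<Rightarrow> nat \<Rightarrow> nat \<Rightarrow> bool" where
  "gd_adj D o' u v \<longleftrightarrow> (if o' then gnxt D u = v else gnxt D v = u)"

text \<open>R3: strands T (top), M (middle), B (bottom); crossings a = T over M (ends tA, mA),
  b = T over B (ends tB, bB), c = M over B (ends mC, bC).  The ends of the two crossings
  on each strand are consecutive; oT, oM, oB say whether a comes before b on T,
  a before c on M, b before c on B.  Realisability of the triangle by three oriented
  arcs in a disk is exactly the sign condition below.  The move reverses the order of the
  two ends on each of the three strands.\<close>
definition gd_R3 :: "gdiag \<Rightarrow> gdiag \<Rightarrow> bool" where
  "gd_R3 D E \<longleftrightarrow> (\<exists>tA tB mA mC bB bC oT oM oB.
     distinct [tA, tB, mC] \<and>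
     gund D tA = Some mA \<and> gund D tB = Some bB \<and> gund D mC = Some bC \<and>
     gd_adj D oT tA tB \<and> gd_adj D oM mA mC \<and> gd_adj D oB bB bC \<and>
     ((oM = gpos D tA) = (oB = gpos D tB)) \<and> ((oT = gpos D tB) = (oM = gpos D mC)) \<and>
     (let \<tau> = transpose tA tB \<circ> transpose mA mC \<circ> transpose bB bC in
      E = D\<lparr>gund := map_option \<tau> \<circ> gund D \<circ> \<tau>, gpos := gpos D \<circ> \<tau>\<rparr>))"

definition rmove :: "gdiag \<Rightarrow> gdiag \<Rightarrow> bool" where
  "rmove D E \<longleftrightarrow> gd_iso D E \<or> ins_plain D E \<or> gd_R1 D E \<or> gd_R2 D E \<or> gd_R3 D E"

definition gd_birth :: "gdiag \<Rightarrow> gdiag \<Rightarrow> bool" where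
  "gd_birth D E \<longleftrightarrow> (\<exists>p. p \<notin> gpts D \<and> E = D\<lparr>gpts := insert p (gpts D)\<rparr>)"

text \<open>Saddle between the arc leaving x and the arc leaving y (any two arcs can be brought
  together antiparallel in a small disk by detour moves).\<close>
definition gd_saddle :: "gdiag \<Rightarrow> gdiag \<Rightarrow> bool" where
  "gd_saddle D E \<longleftrightarrow> (\<exists>x y. x \<in> gpts D \<and> y \<in> gpts D \<and> x \<noteq> y \<and>
     E = D\<lparr>gnxt := (gnxt D)(x := gnxt D y, y := gnxt D x)\<rparr>)"

inductive cob :: "gdiag \<Rightarrow> gdiag \<Rightarrow> int \<Rightarrow> bool" where
  cob_refl: "wf_gd D \<Longrightarrow> cob D D 0"
| cob_move: "cob D E k \<Longrightarrow> wf_gd F \<Longrightarrow> rmove E F \<or> rmove F E \<Longrightarrow> cob D F k"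
| cob_birth: "cob D E k \<Longrightarrow> wf_gd F \<Longrightarrow> gd_birth E F \<Longrightarrow> cob D F (k + 1)"
| cob_death: "cob D E k \<Longrightarrow> wf_gd F \<Longrightarrow> gd_birth F E \<Longrightarrow> cob D F (k + 1)"
| cob_saddle: "cob D E k \<Longrightarrow> wf_gd F \<Longrightarrow> gd_saddle E F \<Longrightarrow> cob D F (k - 1)"

definition concordant :: "gdiag \<Rightarrow> gdiag \<Rightarrow> bool" where
  "concordant K1 K2 \<longleftrightarrow> long_knot K1 \<and> long_knot K2 \<and> cob K1 K2 0"

definition conc_rel :: "(gdiag \<times> gdiag) set" where
  "conc_rel = {(K1, K2). concordant K1 K2}"

definition lk_concat :: "gdiag \<Rightarrow> gdiag \<Rightarrow> gdiag" where
  "lk_concat K1 K2 = (let N = Suc (Max (gpts K1)) in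
    \<lparr>gpts = gpts K1 \<union> (\<lambda>z. z + N) ` gpts K2,
     gnxt = (\<lambda>x. if x \<in> gpts K1 then (if gnxt K1 x = 0 then N else gnxt K1 x)
                else if N \<le> x \<and> x - N \<in> gpts K2
                  then (if gnxt K2 (x - N) = 0 then 0 else gnxt K2 (x - N) + N)
                else x),
     gund = (\<lambda>x. if x \<in> gpts K1 then gund K1 x
                else if N \<le> x \<and> x - N \<in> gpts K2 then map_option (\<lambda>z. z + N) (gund K2 (x - N))
                else None),
     gpos = (\<lambda>x. if x \<in> gpts K1 then gpos K1 x else gpos K2 (x - N))\<rparr>)"

definition VC :: "gdiag set set" where
  "VC = {K. long_knot K} // conc_rel"

definition vc_mult :: "gdiag set \<Rightarrow> gdiag set \<Rightarrow> gdiag set" where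
  "vc_mult A B = (\<Union>a\<in>A. \<Union>b\<in>B. conc_rel `` {lk_concat a b})"

definition VC_group :: "gdiag set monoid" where
  "VC_group = \<lparr>carrier = VC, monoid.mult = vc_mult, one = conc_rel `` {triv_long}\<rparr>"

end

theory Submission
  imports Defs "HOL-Combinatorics.Orbits"
begin

lemma cob_wf: "cob D E k \<Longrightarrow> wf_gd D \<and> wf_gd E"
  by (induction rule: cob.induct) auto

lemma cob_trans: "cob E F l \<Longrightarrow> cob D0 E k0 \<Longrightarrow> cob D0 F (k0 + l)"
proof (induction E F l rule: cob.induct)
  case (cob_refl D) then show ?case by simp
next
  case (cob_move D E k F) then show ?case using cob.cob_move by blast
next
  case (cob_birth D E k F) then show ?case using cob.cob_birth[of D0 E "k0+k" F] by (simp add: add.assoc)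
next
  case (cob_death D E k F) then show ?case using cob.cob_death[of D0 E "k0+k" F] by (simp add: add.assoc)
next
  case (cob_saddle D E k F) then show ?case using cob.cob_saddle[of D0 E "k0+k" F] by (simp add: algebra_simps)
qed

lemma cob_one_move: "wf_gd D \<Longrightarrow> wf_gd E \<Longrightarrow> rmove D E \<or> rmove E D \<Longrightarrow> cob D E 0"
  using cob.cob_move[OF cob_refl] by blast

lemma cob_one_birth: "wf_gd D \<Longrightarrow> wf_gd E \<Longrightarrow> gd_birth D E \<Longrightarrow> cob D E 1"
  using cob.cob_birth[OF cob_refl] by fastforce

lemma cob_one_death: "wf_gd D \<Longrightarrow> wf_gd E \<Longrightarrow> gd_birth E D \<Longrightarrow> cob D E 1"
  using cob.cob_death[OF cob_refl] by fastforce

lemma cob_one_saddle: "wf_gd D \<Longrightarrow> wf_gd E \<Longrightarrow> gd_saddle D E \<Longrightarrow> cob D E (-1)"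
  using cob.cob_saddle[OF cob_refl] by fastforce

lemma saddle_sym: "gd_saddle D E \<Longrightarrow> gd_saddle E D"
  unfolding gd_saddle_def
proof (elim exE conjE)
  fix x y assume h: "x \<in> gpts D" "y \<in> gpts D" "x \<noteq> y"
    "E = D\<lparr>gnxt := (gnxt D)(x := gnxt D y, y := gnxt D x)\<rparr>"
  show "\<exists>x y. x \<in> gpts E \<and> y \<in> gpts E \<and> x \<noteq> y \<and> D = E\<lparr>gnxt := (gnxt E)(x := gnxt E y, y := gnxt E x)\<rparr>"
    using h by (intro exI[of _ x] exI[of _ y]) (auto intro!: ext)
qed

lemma cob_sym: "cob D E k \<Longrightarrow> cob E D k"
proof (induction rule: cob.induct)
  case (cob_refl D) then show ?case by (rule cob.cob_refl)
next
  case (cob_move D E k F)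
  have "cob F E 0" using cob_one_move cob_move cob_wf by blast
  from cob_trans[OF cob_move.IH this] show ?case by simp
next
  case (cob_birth D E k F)
  have "cob F E 1" using cob_one_death cob_birth cob_wf by blast
  from cob_trans[OF cob_birth.IH this] show ?case by (simp add: add.commute)
next
  case (cob_death D E k F)
  have "cob F E 1" using cob_one_birth cob_death cob_wf by blast
  from cob_trans[OF cob_death.IH this] show ?case by (simp add: add.commute)
next
  case (cob_saddle D E k F)
  have "cob F E (-1)" using cob_one_saddle cob_saddle cob_wf saddle_sym by blast
  from cob_trans[OF cob_saddle.IH this] show ?case by (simp add: add.commute)
qed

lemma equiv_conc: "equiv {K. long_knot K} conc_rel"
  unfolding equiv_def refl_on_def sym_def trans_def conc_rel_def concordant_def
proof (intro conjI allI impI)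
  show "{(K1, K2). long_knot K1 \<and> long_knot K2 \<and> cob K1 K2 0} \<subseteq> {K. long_knot K} \<times> {K. long_knot K}" by auto
  show "\<forall>x\<in>{K. long_knot K}. (x, x) \<in> {(K1, K2). long_knot K1 \<and> long_knot K2 \<and> cob K1 K2 0}"
    using cob_refl long_knot_def by auto
  fix x y assume "(x, y) \<in> {(K1, K2). long_knot K1 \<and> long_knot K2 \<and> cob K1 K2 0}"
  then show "(y, x) \<in> {(K1, K2). long_knot K1 \<and> long_knot K2 \<and> cob K1 K2 0}" using cob_sym by auto
next
  fix x y z assume "(x, y) \<in> {(K1, K2). long_knot K1 \<and> long_knot K2 \<and> cob K1 K2 0}"
     "(y, z) \<in> {(K1, K2). long_knot K1 \<and> long_knot K2 \<and> cob K1 K2 0}"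
  then show "(x, z) \<in> {(K1, K2). long_knot K1 \<and> long_knot K2 \<and> cob K1 K2 0}" using cob_trans[of y z 0 x 0] by auto
qed

lemma ext_bij:
  fixes f :: "'a \<Rightarrow> 'a"
  assumes fin: "finite A" and inj: "inj_on f A"
  shows "\<exists>g. bij g \<and> (\<forall>x\<in>A. g x = f x)"
proof -
  define B where "B = A \<union> f ` A"
  have finB: "finite B" using fin by (simp add: B_def)
  have cA: "card (f ` A) = card A" using card_image[OF inj] .
  have "card (B - A) = card (B - f ` A)"
    using finB cA by (simp add: card_Diff_subset B_def fin)
  then obtain h where h: "bij_betw h (B - A) (B - f ` A)"
    using finite_same_card_bij[of "B - A" "B - f ` A"] finB by auto
  define g where "g x = (if x \<in> A then f x else if x \<in> B then h x else x)" for x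
  have img: "g ` B = B"
  proof -
    have "B = A \<union> (B - A)" unfolding B_def by blast
    then have "g ` B = g ` A \<union> g ` (B - A)" by (metis image_Un)
    also have "g ` A = f ` A" by (rule image_cong) (auto simp: g_def)
    also have "g ` (B - A) = h ` (B - A)" by (rule image_cong) (auto simp: g_def)
    finally have "g ` B = f ` A \<union> h ` (B - A)" .
    also have "h ` (B - A) = B - f ` A" using h by (simp add: bij_betw_def)
    finally show ?thesis unfolding B_def by auto
  qed
  have "inj_on g B" by (rule eq_card_imp_inj_on[OF finB]) (simp add: img)
  moreover have "\<And>x. x \<in> B \<Longrightarrow> g x \<in> B" using img by blast
  moreover have "\<And>x. x \<notin> B \<Longrightarrow> g x = x" unfolding g_def B_def by simp
  ultimately have "g permutes B"
    using inj_imp_permutes[OF _ finB] by blast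
  then have "bij g" by (rule permutes_bij)
  moreover have "\<forall>x\<in>A. g x = f x" by (simp add: g_def)
  ultimately show ?thesis by blast
qed

lemma iso_intro:
  assumes wf: "wf_gd D" and inj: "inj_on f (gpts D)" and f0: "f 0 = 0"
    and img: "f ` gpts D = gpts E"
    and c: "\<And>x. x \<in> gpts D \<Longrightarrow> gnxt E (f x) = f (gnxt D x) \<and> gund E (f x) = map_option f (gund D x)
        \<and> (gund D x \<noteq> None \<longrightarrow> gpos E (f x) = gpos D x)"
  shows "gd_iso D E"
proof -
  have fin: "finite (gpts D)" and z: "0 \<in> gpts D" and perm: "gnxt D permutes gpts D"
    and rn: "ran (gund D) \<subseteq> gpts D - {0}" using wf unfolding wf_gd_def by auto
  obtain g where g: "bij g" "\<forall>x\<in>gpts D. g x = f x" using ext_bij[OF fin inj] by blast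
  have nx: "gnxt D x \<in> gpts D" if "x \<in> gpts D" for x
    using perm that by (simp add: permutes_in_image)
  have un: "y \<in> gpts D" if "gund D x = Some y" for x y
    using rn ranI[of "gund D" x y] that by blast
  have "map_option g (gund D x) = map_option f (gund D x)" for x
    using g(2) un by (cases "gund D x") auto
  note mo = this
  have g0: "g 0 = 0" using g(2) z f0 by simp
  have "g ` gpts D = f ` gpts D" by (rule image_cong) (use g(2) in auto)
  then have gi: "g ` gpts D = gpts E" using img by simp
  have "\<forall>x\<in>gpts D. gnxt E (g x) = g (gnxt D x) \<and> gund E (g x) = map_option g (gund D x)
        \<and> (gund D x \<noteq> None \<longrightarrow> gpos E (g x) = gpos D x)"
  proof
    fix x assume x: "x \<in> gpts D"
    have "g (gnxt D x) = f (gnxt D x)" using g(2) nx[OF x] by simp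
    then show "gnxt E (g x) = g (gnxt D x) \<and> gund E (g x) = map_option g (gund D x)
        \<and> (gund D x \<noteq> None \<longrightarrow> gpos E (g x) = gpos D x)"
      using c[OF x] g(2) x mo[of x] by simp
  qed
  then show ?thesis unfolding gd_iso_def using g(1) g0 gi by blast
qed

lemma iso_id:
  assumes "gpts D = gpts E" and "\<And>x. x \<in> gpts D \<Longrightarrow> gnxt E x = gnxt D x"
    and "\<And>x. x \<in> gpts D \<Longrightarrow> gund E x = gund D x"
    and "\<And>x. x \<in> gpts D \<Longrightarrow> gund D x \<noteq> None \<Longrightarrow> gpos E x = gpos D x"
  shows "gd_iso D E"
proof -
  have "bij (id::nat\<Rightarrow>nat)" by simp
  moreover have "\<forall>x\<in>gpts D. gnxt E (id x) = id (gnxt D x) \<and> gund E (id x) = map_option id (gund D x)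
        \<and> (gund D x \<noteq> None \<longrightarrow> gpos E (id x) = gpos D x)"
    using assms(2,3,4) by (simp add: option.map_id)
  ultimately show ?thesis unfolding gd_iso_def using assms(1) by (intro exI[of _ id]) simp
qed

lemma wf_gpos: "wf_gd (D\<lparr>gpos := g\<rparr>) = wf_gd D"
  by (simp add: wf_gd_def)

lemma cob_gpos: "wf_gd D \<Longrightarrow> (\<And>x. gund D x \<noteq> None \<Longrightarrow> g x = gpos D x) \<Longrightarrow> cob D (D\<lparr>gpos := g\<rparr>) 0"
proof (rule cob_one_move)
  assume "wf_gd D" and hg: "\<And>x. gund D x \<noteq> None \<Longrightarrow> g x = gpos D x"
  then show "wf_gd D" "wf_gd (D\<lparr>gpos := g\<rparr>)" by (simp_all add: wf_gpos)
  have "gd_iso D (D\<lparr>gpos := g\<rparr>)" by (rule iso_id) (simp_all add: hg)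
  then show "rmove D (D\<lparr>gpos := g\<rparr>) \<or> rmove (D\<lparr>gpos := g\<rparr>) D" by (simp add: rmove_def)
qed

lemma cob_gpos': "wf_gd D \<Longrightarrow> (\<And>x. gund D x \<noteq> None \<Longrightarrow> g x = gpos D x) \<Longrightarrow> cob (D\<lparr>gpos := g\<rparr>) D 0"
  using cob_gpos cob_sym by blast

definition glue :: "gdiag \<Rightarrow> gdiag \<Rightarrow> (nat \<Rightarrow> nat) \<Rightarrow> (nat \<Rightarrow> nat) \<Rightarrow> (nat \<Rightarrow> nat) \<Rightarrow> (nat \<Rightarrow> nat) \<Rightarrow> gdiag" where
 "glue D L s si t ti = \<lparr>gpts = s ` gpts D \<union> t ` gpts L,
   gnxt = (\<lambda>x. if x \<in> s ` gpts D then (if gnxt D (si x) = 0 then t 0 else s (gnxt D (si x)))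
              else if x \<in> t ` gpts L then (if gnxt L (ti x) = 0 then 0 else t (gnxt L (ti x))) else x),
   gund = (\<lambda>x. if x \<in> s ` gpts D then map_option s (gund D (si x))
              else if x \<in> t ` gpts L then map_option t (gund L (ti x)) else None),
   gpos = (\<lambda>x. if x \<in> s ` gpts D then gpos D (si x) else gpos L (ti x))\<rparr>"

definition glue_ok where
  "glue_ok D L s si t ti \<longleftrightarrow> wf_gd D \<and> wf_gd L \<and> (\<forall>z\<in>gpts D. si (s z) = z) \<and> (\<forall>z\<in>gpts L. ti (t z) = z)
     \<and> s 0 = 0 \<and> s ` gpts D \<inter> t ` gpts L = {}"

lemma wf_parts:
  assumes "wf_gd D"
  shows "finite (gpts D)" "0 \<in> gpts D" "gnxt D permutes gpts D"
    "\<And>x y. gund D x = Some y \<Longrightarrow> x \<in> gpts D \<and> x \<noteq> 0 \<and> y \<in> gpts D \<and> y \<noteq> 0"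
    "\<And>x y z. gund D x = Some z \<Longrightarrow> gund D y = Some z \<Longrightarrow> x = y"
    "\<And>x y z. gund D x = Some y \<Longrightarrow> gund D y \<noteq> Some z"
    "\<And>x. x \<in> gpts D \<Longrightarrow> gnxt D x \<in> gpts D"
    "\<And>x. x \<notin> gpts D \<Longrightarrow> gnxt D x = x"
    "\<And>x. x \<notin> gpts D \<Longrightarrow> gund D x = None"
    "\<And>x y. gnxt D x = gnxt D y \<Longrightarrow> x = y"
proof -
  have w: "finite (gpts D)" "0 \<in> gpts D" "gnxt D permutes gpts D"
     "dom (gund D) \<subseteq> gpts D - {0}" "ran (gund D) \<subseteq> gpts D - {0}"
     "inj_on (gund D) (dom (gund D))" "dom (gund D) \<inter> ran (gund D) = {}"
    using assms unfolding wf_gd_def by auto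
  show "finite (gpts D)" "0 \<in> gpts D" "gnxt D permutes gpts D" using w by auto
  show "\<And>x y. gund D x = Some y \<Longrightarrow> x \<in> gpts D \<and> x \<noteq> 0 \<and> y \<in> gpts D \<and> y \<noteq> 0"
  proof -
    fix x y assume h: "gund D x = Some y"
    then have "x \<in> dom (gund D)" "y \<in> ran (gund D)" by (auto intro: ranI)
    then show "x \<in> gpts D \<and> x \<noteq> 0 \<and> y \<in> gpts D \<and> y \<noteq> 0" using w(4,5) by (auto simp: subset_iff)
  qed
  show "\<And>x y z. gund D x = Some z \<Longrightarrow> gund D y = Some z \<Longrightarrow> x = y"
    using w(6) unfolding inj_on_def by (metis domI)
  show "\<And>x y z. gund D x = Some y \<Longrightarrow> gund D y \<noteq> Some z"
  proof
    fix x y z assume "gund D x = Some y" "gund D y = Some z"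
    then have "y \<in> dom (gund D)" "y \<in> ran (gund D)" by (auto intro: ranI)
    then show False using w(7) by blast
  qed
  show "\<And>x. x \<in> gpts D \<Longrightarrow> gnxt D x \<in> gpts D" using w(3) by (simp add: permutes_in_image)
  show "\<And>x. x \<notin> gpts D \<Longrightarrow> gnxt D x = x" using w(3) by (simp add: permutes_not_in)
  show "\<And>x. x \<notin> gpts D \<Longrightarrow> gund D x = None" using w(4) by blast
  show "\<And>x y. gnxt D x = gnxt D y \<Longrightarrow> x = y" using w(3) by (metis permutes_inj injD)
qed

context
  fixes D L :: gdiag and s si t ti :: "nat \<Rightarrow> nat"
  assumes ok: "glue_ok D L s si t ti"
begin

lemma ok_parts:
  shows "wf_gd D" "wf_gd L" "\<And>z. z \<in> gpts D \<Longrightarrow> si (s z) = z" "\<And>z. z \<in> gpts L \<Longrightarrow> ti (t z) = z"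
    "s 0 = 0" "\<And>a b. a \<in> gpts D \<Longrightarrow> b \<in> gpts L \<Longrightarrow> s a \<noteq> t b"
  using ok unfolding glue_ok_def by auto

lemma s_inj: "a \<in> gpts D \<Longrightarrow> b \<in> gpts D \<Longrightarrow> s a = s b \<longleftrightarrow> a = b"
  using ok_parts(3) by metis
lemma t_inj: "a \<in> gpts L \<Longrightarrow> b \<in> gpts L \<Longrightarrow> t a = t b \<longleftrightarrow> a = b"
  using ok_parts(4) by metis
lemma s_in: assumes "a \<in> gpts D" shows "s a \<in> s ` gpts D \<and> s a \<notin> t ` gpts L"
proof -
  have "s a \<noteq> t b" if "b \<in> gpts L" for b using ok_parts(6)[OF assms that] by metis
  then show ?thesis using assms by blast
qed
lemma t_in: assumes "b \<in> gpts L" shows "t b \<in> t ` gpts L \<and> t b \<notin> s ` gpts D"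
proof -
  have "t b \<noteq> s a" if "a \<in> gpts D" for a using ok_parts(6)[OF that assms] by metis
  then show ?thesis using assms by blast
qed
lemma s_zero: "a \<in> gpts D \<Longrightarrow> s a = 0 \<longleftrightarrow> a = 0"
  using s_inj[of a 0] ok_parts(5) wf_parts(2)[OF ok_parts(1)] by auto
lemma t_zero: "b \<in> gpts L \<Longrightarrow> t b \<noteq> 0"
  using ok_parts(6)[of 0 b] ok_parts(5) wf_parts(2)[OF ok_parts(1)] by auto

lemma glue_s:
  assumes "z \<in> gpts D"
  shows "gnxt (glue D L s si t ti) (s z) = (if gnxt D z = 0 then t 0 else s (gnxt D z))"
    "gund (glue D L s si t ti) (s z) = map_option s (gund D z)"
    "gpos (glue D L s si t ti) (s z) = gpos D z"
  using assms s_in[OF assms] ok_parts(3)[OF assms] by (simp_all add: glue_def)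

lemma glue_t:
  assumes "z \<in> gpts L"
  shows "gnxt (glue D L s si t ti) (t z) = (if gnxt L z = 0 then 0 else t (gnxt L z))"
    "gund (glue D L s si t ti) (t z) = map_option t (gund L z)"
    "gpos (glue D L s si t ti) (t z) = gpos L z"
  using assms t_in[OF assms] ok_parts(4)[OF assms] by (simp_all add: glue_def)

lemma glue_pts: "gpts (glue D L s si t ti) = s ` gpts D \<union> t ` gpts L"
  by (simp add: glue_def)


lemma glue_out: "x \<notin> s ` gpts D \<Longrightarrow> x \<notin> t ` gpts L \<Longrightarrow>
   gnxt (glue D L s si t ti) x = x \<and> gund (glue D L s si t ti) x = None"
  by (simp add: glue_def)

lemma wf_glue: "wf_gd (glue D L s si t ti)"
proof -
  let ?G = "glue D L s si t ti"
  let ?P = "gpts D" and ?Q = "gpts L"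
  note wD = wf_parts[OF ok_parts(1)] and wL = wf_parts[OF ok_parts(2)]
  have t0: "t 0 \<in> t ` ?Q" "t 0 \<notin> s ` ?P" using t_in wL(2) by auto
  have fin: "finite (gpts ?G)" using wD(1) wL(1) by (simp add: glue_pts)
  have z: "0 \<in> gpts ?G" using wD(2) ok_parts(5) by (force simp: glue_pts)
  have into: "gnxt ?G x \<in> gpts ?G" if "x \<in> gpts ?G" for x
  proof -
    from that consider (a) a where "a \<in> ?P" "x = s a" | (b) b where "b \<in> ?Q" "x = t b"
      by (auto simp: glue_pts)
    then show ?thesis
    proof cases
      case a then show ?thesis using glue_s(1)[OF a(1)] wD(7)[OF a(1)] wL(2) by (auto simp: glue_pts)
    next
      case b then show ?thesis using glue_t(1)[OF b(1)] wL(7)[OF b(1)] wD(2) ok_parts(5)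
        by (auto simp: glue_pts)
    qed
  qed
  have inj: "inj_on (gnxt ?G) (gpts ?G)"
  proof (rule inj_onI)
    fix x y assume x: "x \<in> gpts ?G" and y: "y \<in> gpts ?G" and e: "gnxt ?G x = gnxt ?G y"
    have ne: "\<And>x. x \<in> ?P \<Longrightarrow> s x \<noteq> t 0" using t0(2) by (metis image_eqI)
    have ss: "a = b" if "a \<in> ?P" "b \<in> ?P" "gnxt ?G (s a) = gnxt ?G (s b)" for a b
    proof -
      have "gnxt D a = gnxt D b"
        using that glue_s(1)[OF that(1)] glue_s(1)[OF that(2)] wD(7)[OF that(1)] wD(7)[OF that(2)]
          ne[OF wD(7)[OF that(1)]] ne[OF wD(7)[OF that(2)]]
        by (auto split: if_splits simp: s_inj)
      then show ?thesis by (rule wD(10))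
    qed
    have tt: "a = b" if "a \<in> ?Q" "b \<in> ?Q" "gnxt ?G (t a) = gnxt ?G (t b)" for a b
    proof -
      have "gnxt L a = gnxt L b"
        using that glue_t(1)[OF that(1)] glue_t(1)[OF that(2)] wL(7)[OF that(1)] wL(7)[OF that(2)]
          t_zero[OF wL(7)[OF that(1)]] t_zero[OF wL(7)[OF that(2)]]
        by (auto split: if_splits simp: t_inj)
      then show ?thesis by (rule wL(10))
    qed
    have st: "False" if "a \<in> ?P" "b \<in> ?Q" "gnxt ?G (s a) = gnxt ?G (t b)" for a b
    proof -
      have A: "gnxt D a \<in> ?P" "gnxt L b \<in> ?Q" using wD(7) wL(7) that by auto
      show False
      proof (cases "gnxt D a = 0")
        case True
        then have "t 0 = gnxt ?G (t b)" using that glue_s(1)[OF that(1)] by simp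
        then show False using glue_t(1)[OF that(2)] t_zero[OF wL(2)] t_inj[OF wL(2) A(2)]
          by (auto split: if_splits)
      next
        case False
        then have "s (gnxt D a) = gnxt ?G (t b)" using that glue_s(1)[OF that(1)] by simp
        then show False using glue_t(1)[OF that(2)] s_zero[OF A(1)] False s_in[OF A(1)] A(2)
          by (auto split: if_splits)
      qed
    qed
    from x y e show "x = y"
      by (auto simp: glue_pts dest: ss tt st st[OF _ _ sym])
  qed
  have perm: "gnxt ?G permutes gpts ?G"
    by (rule inj_imp_permutes[OF inj fin into]) (auto simp: glue_pts intro!: conjunct1[OF glue_out])
  have und: "gund ?G x = Some y \<Longrightarrow> (\<exists>a b. a \<in> ?P \<and> gund D a = Some b \<and> x = s a \<and> y = s b)
      \<or> (\<exists>a b. a \<in> ?Q \<and> gund L a = Some b \<and> x = t a \<and> y = t b)" for x y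
  proof -
    assume h: "gund ?G x = Some y"
    have "x \<in> s ` ?P \<or> x \<in> t ` ?Q"
    proof (rule ccontr)
      assume "\<not> (x \<in> s ` ?P \<or> x \<in> t ` ?Q)"
      then have "gund ?G x = None" using glue_out by blast
      with h show False by simp
    qed
    then have "x \<in> gpts ?G" by (simp add: glue_pts)
    then consider (a) a where "a \<in> ?P" "x = s a" | (b) b where "b \<in> ?Q" "x = t b"
      by (auto simp: glue_pts)
    then show ?thesis
    proof cases
      case a then show ?thesis using h glue_s(2)[OF a(1)] by auto
    next
      case b then show ?thesis using h glue_t(2)[OF b(1)] by auto
    qed
  qed
  have dom: "dom (gund ?G) \<subseteq> gpts ?G - {0}"
  proof
    fix x assume "x \<in> dom (gund ?G)"
    then obtain y where "gund ?G x = Some y" by auto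
    from und[OF this] show "x \<in> gpts ?G - {0}"
    proof (elim disjE exE conjE)
      fix a b assume "a \<in> ?P" "gund D a = Some b" "x = s a" "y = s b"
      then show ?thesis using wD(4)[of a b] s_zero[of a] by (auto simp: glue_pts)
    next
      fix a b assume "a \<in> ?Q" "gund L a = Some b" "x = t a" "y = t b"
      then show ?thesis using wL(4)[of a b] t_zero[of a] by (auto simp: glue_pts)
    qed
  qed
  have ran: "ran (gund ?G) \<subseteq> gpts ?G - {0}"
  proof
    fix y assume "y \<in> ran (gund ?G)"
    then obtain x where "gund ?G x = Some y" by (auto simp: ran_def)
    from und[OF this] show "y \<in> gpts ?G - {0}"
    proof (elim disjE exE conjE)
      fix a b assume "a \<in> ?P" "gund D a = Some b" "x = s a" "y = s b"
      then show ?thesis using wD(4)[of a b] s_zero[of b] by (auto simp: glue_pts)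
    next
      fix a b assume "a \<in> ?Q" "gund L a = Some b" "x = t a" "y = t b"
      then show ?thesis using wL(4)[of a b] t_zero[of b] by (auto simp: glue_pts)
    qed
  qed
  have injg: "inj_on (gund ?G) (dom (gund ?G))"
  proof (rule inj_onI)
    fix x y assume "x \<in> dom (gund ?G)" "y \<in> dom (gund ?G)" and e: "gund ?G x = gund ?G y"
    then obtain v where v1: "gund ?G x = Some v" and v2: "gund ?G y = Some v" by auto
    from und[OF v1] und[OF v2] show "x = y"
    proof (elim disjE exE conjE)
      fix a b a' b' assume "a \<in> ?P" "gund D a = Some b" "x = s a" "v = s b" "a' \<in> ?P" "gund D a' = Some b'" "y = s a'" "v = s b'"
      then show "x = y" using wD(4) wD(5) s_inj by metis
    next
      fix a b a' b' assume "a \<in> ?P" "gund D a = Some b" "x = s a" "v = s b" "a' \<in> ?Q" "gund L a' = Some b'" "y = t a'" "v = t b'"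
      then show "x = y" using wD(4) wL(4) ok_parts(6) by metis
    next
      fix a b a' b' assume "a \<in> ?Q" "gund L a = Some b" "x = t a" "v = t b" "a' \<in> ?P" "gund D a' = Some b'" "y = s a'" "v = s b'"
      then show "x = y" using wD(4) wL(4) ok_parts(6) by metis
    next
      fix a b a' b' assume "a \<in> ?Q" "gund L a = Some b" "x = t a" "v = t b" "a' \<in> ?Q" "gund L a' = Some b'" "y = t a'" "v = t b'"
      then show "x = y" using wL(4) wL(5) t_inj by metis
    qed
  qed
  have disj: "dom (gund ?G) \<inter> ran (gund ?G) = {}"
  proof (rule ccontr)
    assume "dom (gund ?G) \<inter> ran (gund ?G) \<noteq> {}"
    then obtain x y w where w1: "gund ?G x = Some w" and w2: "gund ?G y = Some x"
      by (auto simp: ran_def)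
    from und[OF w1] und[OF w2] show False
    proof (elim disjE exE conjE)
      fix a b a' b' assume "a \<in> ?P" "gund D a = Some b" "x = s a" "w = s b" "a' \<in> ?P" "gund D a' = Some b'" "y = s a'" "x = s b'"
      then show False using wD(4) wD(6) s_inj by metis
    next
      fix a b a' b' assume "a \<in> ?P" "gund D a = Some b" "x = s a" "w = s b" "a' \<in> ?Q" "gund L a' = Some b'" "y = t a'" "x = t b'"
      then show False using wD(4) wL(4) ok_parts(6) by metis
    next
      fix a b a' b' assume "a \<in> ?Q" "gund L a = Some b" "x = t a" "w = t b" "a' \<in> ?P" "gund D a' = Some b'" "y = s a'" "x = s b'"
      then show False using wD(4) wL(4) ok_parts(6) by metis
    next
      fix a b a' b' assume "a \<in> ?Q" "gund L a = Some b" "x = t a" "w = t b" "a' \<in> ?Q" "gund L a' = Some b'" "y = t a'" "x = t b'"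
      then show False using wL(4) wL(6) t_inj by metis
    qed
  qed
  show ?thesis unfolding wf_gd_def using fin z perm dom ran injg disj by blast
qed

end

definition per :: "gdiag \<Rightarrow> nat" where
  "per D = funpow_dist1 (gnxt D) 0 0"

lemma lk_period:
  assumes "long_knot D"
  shows "0 < per D" "(gnxt D ^^ per D) 0 = 0" "\<And>j. 0 < j \<Longrightarrow> j < per D \<Longrightarrow> (gnxt D ^^ j) 0 \<noteq> 0"
    "\<And>x. x \<in> gpts D \<Longrightarrow> \<exists>n<per D. (gnxt D ^^ n) 0 = x"
proof -
  have wf: "wf_gd D" and reach: "\<forall>x\<in>gpts D. \<exists>n. (gnxt D ^^ n) 0 = x" using assms by (auto simp: long_knot_def)
  note w = wf_parts[OF wf]
  have "permutation (gnxt D)" using permutes_imp_permutation[OF w(1) w(3)] .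
  then have orb: "0 \<in> orbit (gnxt D) 0" by (rule permutation_self_in_orbit)
  show "0 < per D" by (simp add: per_def)
  show p: "(gnxt D ^^ per D) 0 = 0" unfolding per_def using funpow_dist1_prop[OF orb] .
  show "\<And>j. 0 < j \<Longrightarrow> j < per D \<Longrightarrow> (gnxt D ^^ j) 0 \<noteq> 0"
    unfolding per_def using funpow_dist1_least by metis
  fix x assume "x \<in> gpts D"
  then obtain k where k: "(gnxt D ^^ k) 0 = x" using reach by blast
  have "(gnxt D ^^ (k mod per D)) 0 = x" using funpow_mod_eq[where f="gnxt D" and n="per D" and x=0 and m=k] p k by simp
  moreover have "k mod per D < per D" by (simp add: per_def)
  ultimately show "\<exists>n<per D. (gnxt D ^^ n) 0 = x" by blast
qed

lemma iter_seg:
  assumes "\<And>j. j < k \<Longrightarrow> f (g j) = g (Suc j)"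
  shows "(f ^^ k) (g 0) = g k"
  using assms by (induction k) auto

lemma long_knot_glue:
  assumes ok: "glue_ok D L s si t ti" and lD: "long_knot D" and lL: "long_knot L"
  shows "long_knot (glue D L s si t ti)"
proof -
  let ?G = "glue D L s si t ti"
  let ?m = "per D" and ?m' = "per L"
  note pD = lk_period[OF lD] and pL = lk_period[OF lL]
  note wD = wf_parts[OF ok_parts(1)[OF ok]] and wL = wf_parts[OF ok_parts(2)[OF ok]]
  define g where "g j = (if j < ?m then s ((gnxt D ^^ j) 0) else t ((gnxt L ^^ (j - ?m)) 0))" for j
  have inD: "(gnxt D ^^ j) 0 \<in> gpts D" for j
    by (induction j) (auto simp: wD(2) wD(7))
  have inL: "(gnxt L ^^ j) 0 \<in> gpts L" for j
    by (induction j) (auto simp: wL(2) wL(7))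
  have step: "gnxt ?G (g j) = g (Suc j)" if "Suc j < ?m + ?m'" for j
  proof (cases "Suc j < ?m")
    case True
    have "(gnxt D ^^ Suc j) 0 \<noteq> 0" using pD(3)[of "Suc j"] True by simp
    then show ?thesis using True glue_s(1)[OF ok inD[of j]] by (simp add: g_def)
  next
    case False
    show ?thesis
    proof (cases "Suc j = ?m")
      case True
      then have "gnxt D ((gnxt D ^^ j) 0) = 0" using pD(2) unfolding True[symmetric] by simp
      then show ?thesis using True glue_s(1)[OF ok inD[of j]] by (simp add: g_def)
    next
      case F2: False
      then have jm: "?m \<le> j" "Suc j - ?m = Suc (j - ?m)" using False by auto
      have "(gnxt L ^^ Suc (j - ?m)) 0 \<noteq> 0" using pL(3)[of "Suc (j - ?m)"] that jm by simp
      then show ?thesis using jm glue_t(1)[OF ok inL[of "j - ?m"]] by (simp add: g_def)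
    qed
  qed
  have g0: "g 0 = 0" using pD(1) ok_parts(5)[OF ok] by (simp add: g_def)
  have reach: "\<exists>n. (gnxt ?G ^^ n) 0 = x" if "x \<in> gpts ?G" for x
  proof -
    have "\<exists>j < ?m + ?m'. g j = x"
    proof -
      from that consider (a) a where "a \<in> gpts D" "x = s a" | (b) b where "b \<in> gpts L" "x = t b"
        by (auto simp: glue_pts[OF ok])
      then show ?thesis
      proof cases
        case a
        then obtain n where "n < ?m" "(gnxt D ^^ n) 0 = a" using pD(4) by blast
        then show ?thesis using a by (intro exI[of _ n]) (simp add: g_def)
      next
        case b
        then obtain n where "n < ?m'" "(gnxt L ^^ n) 0 = b" using pL(4) by blast
        then show ?thesis using b by (intro exI[of _ "?m + n"]) (simp add: g_def)
      qed
    qed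
    then obtain j where j: "j < ?m + ?m'" "g j = x" by blast
    have "(gnxt ?G ^^ j) (g 0) = g j" by (rule iter_seg) (use step j in auto)
    then show ?thesis using g0 j by metis
  qed
  show ?thesis unfolding long_knot_def using wf_glue[OF ok] reach by blast
qed

lemma glue_iso:
  assumes ok1: "glue_ok D L s1 si1 t1 ti1" and ok2: "glue_ok D L s2 si2 t2 ti2"
  shows "gd_iso (glue D L s1 si1 t1 ti1) (glue D L s2 si2 t2 ti2)"
proof -
  let ?G1 = "glue D L s1 si1 t1 ti1" and ?G2 = "glue D L s2 si2 t2 ti2"
  note wD = wf_parts[OF ok_parts(1)[OF ok1]] and wL = wf_parts[OF ok_parts(2)[OF ok1]]
  define f where "f x = (if x \<in> s1 ` gpts D then s2 (si1 x) else t2 (ti1 x))" for x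
  have fs: "f (s1 a) = s2 a" if "a \<in> gpts D" for a
    using that ok_parts(3)[OF ok1 that] by (simp add: f_def)
  have ft: "f (t1 b) = t2 b" if "b \<in> gpts L" for b
    using that ok_parts(4)[OF ok1 that] t_in[OF ok1 that] by (simp add: f_def)
  have ms: "map_option f (map_option s1 (gund D a)) = map_option s2 (gund D a)" for a
    using wD(4) fs by (cases "gund D a") auto
  have mt: "map_option f (map_option t1 (gund L a)) = map_option t2 (gund L a)" for a
    using wL(4) ft by (cases "gund L a") auto
  have inj: "inj_on f (gpts ?G1)"
  proof (rule inj_onI)
    fix x y assume "x \<in> gpts ?G1" "y \<in> gpts ?G1" "f x = f y"
    note xy = this
    have cx: "(\<exists>a\<in>gpts D. x = s1 a) \<or> (\<exists>a\<in>gpts L. x = t1 a)" using xy(1) by (auto simp: glue_pts[OF ok1])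
    have cy: "(\<exists>a\<in>gpts D. y = s1 a) \<or> (\<exists>a\<in>gpts L. y = t1 a)" using xy(2) by (auto simp: glue_pts[OF ok1])
    from cx cy show "x = y"
    proof (elim disjE bexE)
      fix a b assume "a \<in> gpts D" "x = s1 a" "b \<in> gpts D" "y = s1 b"
      then show ?thesis using xy(3) fs s_inj[OF ok2] by simp
    next
      fix a b assume "a \<in> gpts D" "x = s1 a" "b \<in> gpts L" "y = t1 b"
      then show ?thesis using xy(3) fs ft ok_parts(6)[OF ok2] by simp
    next
      fix a b assume "a \<in> gpts L" "x = t1 a" "b \<in> gpts D" "y = s1 b"
      then show ?thesis using xy(3) fs ft ok_parts(6)[OF ok2] by (metis)
    next
      fix a b assume "a \<in> gpts L" "x = t1 a" "b \<in> gpts L" "y = t1 b"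
      then show ?thesis using xy(3) ft t_inj[OF ok2] by simp
    qed
  qed
  have f0: "f 0 = 0" using fs[OF wD(2)] ok_parts(5)[OF ok1] ok_parts(5)[OF ok2] by simp
  have i1: "f ` s1 ` gpts D = s2 ` gpts D" unfolding image_image by (rule image_cong) (simp_all add: fs)
  have i2: "f ` t1 ` gpts L = t2 ` gpts L" unfolding image_image by (rule image_cong) (simp_all add: ft)
  have img: "f ` gpts ?G1 = gpts ?G2"
    unfolding glue_pts[OF ok1] glue_pts[OF ok2] image_Un i1 i2 ..
  show ?thesis
  proof (rule iso_intro[OF wf_glue[OF ok1] inj f0 img])
    fix x assume "x \<in> gpts ?G1"
    then consider (a) a where "a \<in> gpts D" "x = s1 a" | (b) b where "b \<in> gpts L" "x = t1 b"
      by (auto simp: glue_pts[OF ok1])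
    then show "gnxt ?G2 (f x) = f (gnxt ?G1 x) \<and> gund ?G2 (f x) = map_option f (gund ?G1 x)
        \<and> (gund ?G1 x \<noteq> None \<longrightarrow> gpos ?G2 (f x) = gpos ?G1 x)"
    proof cases
      case a
      then show ?thesis using glue_s[OF ok1 a(1)] glue_s[OF ok2 a(1)] fs ft wD(7)[OF a(1)] wL(2) ms
        by simp
    next
      case b
      then show ?thesis using f0 glue_t[OF ok1 b(1)] glue_t[OF ok2 b(1)] fs ft wL(7)[OF b(1)] mt
        by simp
    qed
  qed
qed

locale emb =
  fixes s t si ti :: "nat \<Rightarrow> nat"
  assumes si[simp]: "si (s z) = z" and ti[simp]: "ti (t z) = z" and s0[simp]: "s 0 = 0"
    and st[simp]: "s a \<noteq> t b"
begin

lemma s_eq[simp]: "s a = s b \<longleftrightarrow> a = b" by (metis si)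
lemma t_eq[simp]: "t a = t b \<longleftrightarrow> a = b" by (metis ti)
lemma ts[simp]: "t b \<noteq> s a" using st by metis
lemma s_0_iff[simp]: "s a = 0 \<longleftrightarrow> a = 0" using s_eq[of a 0] by simp
lemma s_0_iff'[simp]: "0 = s a \<longleftrightarrow> a = 0" using s_eq[of a 0] by auto
lemma t_ne0[simp]: "t b \<noteq> 0" "0 \<noteq> t b" using st[of 0 b] by auto
lemma s_img[simp]: "s z \<in> s ` A \<longleftrightarrow> z \<in> A" by auto
lemma t_img[simp]: "t z \<in> t ` A \<longleftrightarrow> z \<in> A" by auto
lemma s_img_t[simp]: "s z \<notin> t ` A" by auto
lemma t_img_s[simp]: "t z \<notin> s ` A" by auto
lemma zero_img_t[simp]: "0 \<notin> t ` A" by auto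

definition gl :: "gdiag \<Rightarrow> gdiag \<Rightarrow> gdiag" where "gl D L = glue D L s si t ti"

lemma gl_ok: "wf_gd D \<Longrightarrow> wf_gd L \<Longrightarrow> glue_ok D L s si t ti"
  unfolding glue_ok_def by auto

lemma wf_gl: "wf_gd D \<Longrightarrow> wf_gd L \<Longrightarrow> wf_gd (gl D L)"
  unfolding gl_def by (rule wf_glue[OF gl_ok])

lemma gl_pts: "gpts (gl D L) = s ` gpts D \<union> t ` gpts L"
  by (simp add: gl_def glue_def)

lemma gl_s[simp]:
  "gnxt (gl D L) (s z) = (if z \<in> gpts D then (if gnxt D z = 0 then t 0 else s (gnxt D z)) else s z)"
  "gund (gl D L) (s z) = (if z \<in> gpts D then map_option s (gund D z) else None)"
  "gpos (gl D L) (s z) = (if z \<in> gpts D then gpos D z else gpos L (ti (s z)))"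
  by (simp_all add: gl_def glue_def)

lemma gl_t[simp]:
  "gnxt (gl D L) (t z) = (if z \<in> gpts L then (if gnxt L z = 0 then 0 else t (gnxt L z)) else t z)"
  "gund (gl D L) (t z) = (if z \<in> gpts L then map_option t (gund L z) else None)"
  "gpos (gl D L) (t z) = gpos L z"
  by (simp_all add: gl_def glue_def)

lemma gl_other:
  assumes "y \<notin> range s" "y \<notin> range t"
  shows "gnxt (gl D L) y = y" "gund (gl D L) y = None"
  using assms by (auto simp: gl_def glue_def)

lemma y_cases:
  obtains (S) z where "y = s z" | (T) z where "y = t z" | (O) "y \<notin> range s" "y \<notin> range t"
  by blast

lemma eqI_gpos:
  fixes A B :: gdiag
  assumes "gpts A = gpts B"
    and "\<And>z. gnxt A (s z) = gnxt B (s z)" "\<And>z. gnxt A (t z) = gnxt B (t z)"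
    and "\<And>y. y \<notin> range s \<Longrightarrow> y \<notin> range t \<Longrightarrow> gnxt A y = gnxt B y"
    and "\<And>z. gund A (s z) = gund B (s z)" "\<And>z. gund A (t z) = gund B (t z)"
    and "\<And>y. y \<notin> range s \<Longrightarrow> y \<notin> range t \<Longrightarrow> gund A y = gund B y"
  shows "A = B\<lparr>gpos := gpos A\<rparr>"
proof -
  have "gnxt A y = gnxt B y" for y by (cases y rule: y_cases) (use assms in auto)
  moreover have "gund A y = gund B y" for y by (cases y rule: y_cases) (use assms in auto)
  ultimately show ?thesis using assms(1) by (simp add: gdiag.equality fun_eq_iff)
qed

lemma cob_via:
  assumes wfB: "wf_gd B" and eq: "X = B\<lparr>gpos := gpos X\<rparr>"
    and pos: "\<And>y. gund B y \<noteq> None \<Longrightarrow> gpos X y = gpos B y"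
    and step: "wf_gd X \<Longrightarrow> cob A X k"
  shows "cob A B k"
proof -
  have wX: "wf_gd X" using wfB eq wf_gpos by metis
  have "cob X B 0" using cob_gpos'[OF wfB, of "gpos X"] pos eq by simp
  from cob_trans[OF this step[OF wX]] show ?thesis by simp
qed

end

context emb begin

lemma liftD_iso:
  assumes wD: "wf_gd D" and wE: "wf_gd E" and wL: "wf_gd L" and iso: "gd_iso D E"
  shows "gd_iso (gl D L) (gl E L)"
proof -
  obtain f where bf: "bij f" and f0: "f 0 = 0" and fimg: "f ` gpts D = gpts E"
    and c: "\<And>x. x \<in> gpts D \<Longrightarrow> gnxt E (f x) = f (gnxt D x) \<and> gund E (f x) = map_option f (gund D x)
        \<and> (gund D x \<noteq> None \<longrightarrow> gpos E (f x) = gpos D x)"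
    using iso unfolding gd_iso_def by blast
  have finj: "f a = f b \<longleftrightarrow> a = b" for a b using bf by (metis bij_def injD)
  have fz: "f a = 0 \<longleftrightarrow> a = 0" for a using finj[of a 0] f0 by simp
  define g where "g y = (if y \<in> range s then s (f (si y)) else y)" for y
  have gs[simp]: "g (s z) = s (f z)" for z by (simp add: g_def)
  have gt[simp]: "g (t z) = t z" for z by (auto simp: g_def)
  have g0[simp]: "g 0 = 0" using gs[of 0] f0 by simp
  have fin: "f a \<in> gpts E" if "a \<in> gpts D" for a using fimg that by blast
  have inj: "inj_on g (gpts (gl D L))"
  proof (rule inj_onI)
    fix x y assume "x \<in> gpts (gl D L)" "y \<in> gpts (gl D L)" "g x = g y"
    then show "x = y" by (auto simp: gl_pts finj)
  qed
  have img: "g ` gpts (gl D L) = gpts (gl E L)"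
  proof -
    have "g ` gpts (gl D L) = (g \<circ> s) ` gpts D \<union> (g \<circ> t) ` gpts L" by (simp add: gl_pts image_Un image_comp)
    also have "(g \<circ> s) ` gpts D = s ` f ` gpts D" by (auto simp: image_iff)
    also have "(g \<circ> t) ` gpts L = t ` gpts L" by (auto simp: image_iff)
    finally show ?thesis using fimg by (simp add: gl_pts)
  qed
  have mo: "map_option g (map_option s w) = map_option s (map_option f w)" for w by (cases w) auto
  have mt: "map_option g (map_option t w) = map_option t w" for w by (cases w) auto
  show ?thesis
  proof (rule iso_intro[OF wf_gl[OF wD wL] inj g0 img])
    fix x assume "x \<in> gpts (gl D L)"
    then consider (a) a where "a \<in> gpts D" "x = s a" | (b) b where "b \<in> gpts L" "x = t b"
      by (auto simp: gl_pts)
    then show "gnxt (gl E L) (g x) = g (gnxt (gl D L) x) \<and> gund (gl E L) (g x) = map_option g (gund (gl D L) x)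
        \<and> (gund (gl D L) x \<noteq> None \<longrightarrow> gpos (gl E L) (g x) = gpos (gl D L) x)"
    proof cases
      case a
      then show ?thesis using c[OF a(1)] fin[OF a(1)] by (simp add: fz mo)
    next
      case b
      then show ?thesis by (simp add: mt)
    qed
  qed
qed


lemma gl_gpos_eq: "gpts D = gpts E \<Longrightarrow> gpos D = gpos E \<Longrightarrow> gpos (gl D L) = gpos (gl E L)"
  by (simp add: gl_def glue_def)

lemma glR_gpos_eq: "gpts D = gpts E \<Longrightarrow> gpos D = gpos E \<Longrightarrow> gpos (gl L D) = gpos (gl L E)"
  by (simp add: gl_def glue_def)

lemma liftD_ins:
  assumes wD: "wf_gd D" and wE: "wf_gd E" and wL: "wf_gd L" and mv: "ins_plain D E"
  shows "cob (gl D L) (gl E L) 0"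
proof -
  obtain x p where x: "x \<in> gpts D" and p: "p \<notin> gpts D"
    and E: "E = D\<lparr>gpts := insert p (gpts D), gnxt := (gnxt D)(x := p, p := gnxt D x)\<rparr>"
    using mv unfolding ins_plain_def by blast
  note w = wf_parts[OF wD]
  have p0: "p \<noteq> 0" using w(2) p by metis
  have xp: "x \<noteq> p" using p x by metis
  have up: "gund D p = None" using w(9) p .
  define X where "X = (gl D L)\<lparr>gpts := insert (s p) (gpts (gl D L)),
      gnxt := (gnxt (gl D L))(s x := s p, s p := gnxt (gl D L) (s x))\<rparr>"
  show ?thesis
  proof (rule cob_via[OF wf_gl[OF wE wL]])
    show "X = (gl E L)\<lparr>gpos := gpos X\<rparr>"
    proof (rule eqI_gpos)
      show "gpts X = gpts (gl E L)" by (simp add: X_def E gl_pts)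
      show "gnxt X (s z) = gnxt (gl E L) (s z)" for z using x p p0 xp by (simp add: X_def E)
      show "gnxt X (t z) = gnxt (gl E L) (t z)" for z by (simp add: X_def E)
      show "gnxt X v = gnxt (gl E L) v" if "v \<notin> range s" "v \<notin> range t" for v
        using that by (auto simp: X_def gl_other)
      show "gund X (s z) = gund (gl E L) (s z)" for z using up by (simp add: X_def E)
      show "gund X (t z) = gund (gl E L) (t z)" for z by (simp add: X_def E)
      show "gund X v = gund (gl E L) v" if "v \<notin> range s" "v \<notin> range t" for v
        using that by (simp add: X_def gl_other)
    qed
    show "gpos X y = gpos (gl E L) y" if "gund (gl E L) y \<noteq> None" for y
    proof (cases y rule: y_cases)
      case (S z) then show ?thesis using that by (auto simp: X_def E up split: if_splits)
    next
      case (T z) then show ?thesis by (simp add: X_def)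
    next
      case O then show ?thesis using that gl_other(2)[OF O, of E L] by simp
    qed
    assume wX: "wf_gd X"
    have "ins_plain (gl D L) X" unfolding ins_plain_def
      by (rule exI[of _ "s x"], rule exI[of _ "s p"]) (simp add: X_def gl_pts x p)
    then show "cob (gl D L) X 0" using cob_one_move[OF wf_gl[OF wD wL] wX] rmove_def by blast
  qed
qed

lemma liftD_birth:
  assumes wD: "wf_gd D" and wE: "wf_gd E" and wL: "wf_gd L" and mv: "gd_birth D E"
  shows "cob (gl D L) (gl E L) 1"
proof -
  obtain p where p: "p \<notin> gpts D" and E: "E = D\<lparr>gpts := insert p (gpts D)\<rparr>"
    using mv unfolding gd_birth_def by blast
  note w = wf_parts[OF wD]
  have p0: "p \<noteq> 0" using w(2) p by metis
  have up: "gund D p = None" using w(9) p .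
  have np: "gnxt D p = p" using w(8) p .
  define X where "X = (gl D L)\<lparr>gpts := insert (s p) (gpts (gl D L))\<rparr>"
  show ?thesis
  proof (rule cob_via[OF wf_gl[OF wE wL]])
    show "X = (gl E L)\<lparr>gpos := gpos X\<rparr>"
    proof (rule eqI_gpos)
      show "gpts X = gpts (gl E L)" by (simp add: X_def E gl_pts)
    qed (auto simp: X_def E p0 p up np gl_other)
    show "gpos X y = gpos (gl E L) y" if "gund (gl E L) y \<noteq> None" for y
    proof (cases y rule: y_cases)
      case (S z) then show ?thesis using that by (auto simp: X_def E up split: if_splits)
    next
      case (T z) then show ?thesis by (simp add: X_def)
    next
      case O then show ?thesis using that gl_other(2)[OF O, of E L] by simp
    qed
    assume wX: "wf_gd X"
    have "gd_birth (gl D L) X" unfolding gd_birth_def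
      by (rule exI[of _ "s p"]) (simp add: X_def gl_pts p)
    then show "cob (gl D L) X 1" using cob_one_birth[OF wf_gl[OF wD wL] wX] by blast
  qed
qed

lemma liftD_saddle:
  assumes wD: "wf_gd D" and wE: "wf_gd E" and wL: "wf_gd L" and mv: "gd_saddle D E"
  shows "cob (gl D L) (gl E L) (-1)"
proof -
  obtain x y where x: "x \<in> gpts D" and y: "y \<in> gpts D" and xy: "x \<noteq> y"
    and E: "E = D\<lparr>gnxt := (gnxt D)(x := gnxt D y, y := gnxt D x)\<rparr>"
    using mv unfolding gd_saddle_def by blast
  define X where "X = (gl D L)\<lparr>gnxt := (gnxt (gl D L))(s x := gnxt (gl D L) (s y), s y := gnxt (gl D L) (s x))\<rparr>"
  show ?thesis
  proof (rule cob_via[OF wf_gl[OF wE wL]])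
    show "X = (gl E L)\<lparr>gpos := gpos X\<rparr>"
    proof (rule eqI_gpos)
      show "gpts X = gpts (gl E L)" by (simp add: X_def E gl_pts)
    qed (auto simp: X_def E x y xy gl_other)
    show "gpos X v = gpos (gl E L) v" if "gund (gl E L) v \<noteq> None" for v
      using gl_gpos_eq[of E D L] by (simp add: X_def E)
    assume wX: "wf_gd X"
    have "gd_saddle (gl D L) X" unfolding gd_saddle_def
      by (rule exI[of _ "s x"], rule exI[of _ "s y"]) (simp add: X_def gl_pts x y xy)
    then show "cob (gl D L) X (-1)" using cob_one_saddle[OF wf_gl[OF wD wL] wX] by blast
  qed
qed


lemma gl_adj_s:
  assumes "u \<in> gpts D" "v \<in> gpts D" "u \<noteq> 0" "v \<noteq> 0"
  shows "gd_adj (gl D L) o' (s u) (s v) \<longleftrightarrow> gd_adj D o' u v"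
  using assms by (auto simp: gd_adj_def)

lemma liftD_R1:
  assumes wD: "wf_gd D" and wE: "wf_gd E" and wL: "wf_gd L" and mv: "gd_R1 D E"
  shows "cob (gl D L) (gl E L) 0"
proof -
  obtain x y where xy: "gund D x = Some y" and adj: "gnxt D x = y \<or> gnxt D y = x"
    and E: "E = D\<lparr>gund := (gund D)(x := None)\<rparr>"
    using mv unfolding gd_R1_def by blast
  note w = wf_parts[OF wD]
  have h: "x \<in> gpts D" "x \<noteq> 0" "y \<in> gpts D" "y \<noteq> 0" using w(4)[OF xy] by auto
  define X where "X = (gl D L)\<lparr>gund := (gund (gl D L))(s x := None)\<rparr>"
  show ?thesis
  proof (rule cob_via[OF wf_gl[OF wE wL]])
    show "X = (gl E L)\<lparr>gpos := gpos X\<rparr>"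
    proof (rule eqI_gpos)
      show "gpts X = gpts (gl E L)" by (simp add: X_def E gl_pts)
      show "gnxt X (s z) = gnxt (gl E L) (s z)" for z by (simp add: X_def E)
      show "gnxt X (t z) = gnxt (gl E L) (t z)" for z by (simp add: X_def E)
      show "gnxt X v = gnxt (gl E L) v" if "v \<notin> range s" "v \<notin> range t" for v
        using that by (simp add: X_def gl_other)
      show "gund X (s z) = gund (gl E L) (s z)" for z by (simp add: X_def E)
      show "gund X (t z) = gund (gl E L) (t z)" for z by (simp add: X_def E)
      show "gund X v = gund (gl E L) v" if "v \<notin> range s" "v \<notin> range t" for v
        using that by (auto simp: X_def gl_other)
    qed
    show "gpos X v = gpos (gl E L) v" if "gund (gl E L) v \<noteq> None" for v
      using gl_gpos_eq[of E D L] by (simp add: X_def E)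
    assume wX: "wf_gd X"
    have "gd_R1 (gl D L) X" unfolding gd_R1_def
      by (rule exI[of _ "s x"], rule exI[of _ "s y"]) (use h xy adj in \<open>auto simp: X_def\<close>)
    then show "cob (gl D L) X 0" using cob_one_move[OF wf_gl[OF wD wL] wX] rmove_def by blast
  qed
qed

lemma liftD_R2:
  assumes wD: "wf_gd D" and wE: "wf_gd E" and wL: "wf_gd L" and mv: "gd_R2 D E"
  shows "cob (gl D L) (gl E L) 0"
proof -
  obtain x1 x2 y1 y2 where u1: "gund D x1 = Some y1" and u2: "gund D x2 = Some y2"
    and n1: "gnxt D x1 = x2" and n2: "gnxt D y1 = y2 \<or> gnxt D y2 = y1" and sg: "gpos D x1 \<noteq> gpos D x2"
    and E: "E = D\<lparr>gund := (gund D)(x1 := None, x2 := None)\<rparr>"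
    using mv unfolding gd_R2_def by blast
  note w = wf_parts[OF wD]
  have h: "x1 \<in> gpts D" "x1 \<noteq> 0" "y1 \<in> gpts D" "y1 \<noteq> 0" using w(4)[OF u1] by auto
  have h2: "x2 \<in> gpts D" "x2 \<noteq> 0" "y2 \<in> gpts D" "y2 \<noteq> 0" using w(4)[OF u2] by auto
  define X where "X = (gl D L)\<lparr>gund := (gund (gl D L))(s x1 := None, s x2 := None)\<rparr>"
  show ?thesis
  proof (rule cob_via[OF wf_gl[OF wE wL]])
    show "X = (gl E L)\<lparr>gpos := gpos X\<rparr>"
    proof (rule eqI_gpos)
      show "gpts X = gpts (gl E L)" by (simp add: X_def E gl_pts)
      show "gnxt X (s z) = gnxt (gl E L) (s z)" for z by (simp add: X_def E)
      show "gnxt X (t z) = gnxt (gl E L) (t z)" for z by (simp add: X_def E)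
      show "gnxt X v = gnxt (gl E L) v" if "v \<notin> range s" "v \<notin> range t" for v
        using that by (simp add: X_def gl_other)
      show "gund X (s z) = gund (gl E L) (s z)" for z by (simp add: X_def E)
      show "gund X (t z) = gund (gl E L) (t z)" for z by (simp add: X_def E)
      show "gund X v = gund (gl E L) v" if "v \<notin> range s" "v \<notin> range t" for v
        using that by (auto simp: X_def gl_other)
    qed
    show "gpos X v = gpos (gl E L) v" if "gund (gl E L) v \<noteq> None" for v
      using gl_gpos_eq[of E D L] by (simp add: X_def E)
    assume wX: "wf_gd X"
    have "gd_R2 (gl D L) X" unfolding gd_R2_def
      by (rule exI[of _ "s x1"], rule exI[of _ "s x2"], rule exI[of _ "s y1"], rule exI[of _ "s y2"])
         (use h h2 u1 u2 n1 n2 sg in \<open>auto simp: X_def\<close>)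
    then show "cob (gl D L) X 0" using cob_one_move[OF wf_gl[OF wD wL] wX] rmove_def by blast
  qed
qed

lemma tr_s: "Transposition.transpose (s a) (s b) (s z) = s (Transposition.transpose a b z)"
  by (simp add: transpose_def)
lemma tr_t: "Transposition.transpose (s a) (s b) (t z) = t z"
  by (simp add: transpose_def)
lemma tr_o: "v \<notin> range s \<Longrightarrow> Transposition.transpose (s a) (s b) v = v"
  by (auto simp: transpose_def)
lemma tr_in: "a \<in> A \<Longrightarrow> b \<in> A \<Longrightarrow> Transposition.transpose a b z \<in> A \<longleftrightarrow> z \<in> A"
  by (auto simp: transpose_def)

lemma liftD_R3:
  assumes wD: "wf_gd D" and wE: "wf_gd E" and wL: "wf_gd L" and mv: "gd_R3 D E"
  shows "cob (gl D L) (gl E L) 0"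
proof -
  obtain tA tB mA mC bB bC oT oM oB where ds: "distinct [tA, tB, mC]"
    and uA: "gund D tA = Some mA" and uB: "gund D tB = Some bB" and uC: "gund D mC = Some bC"
    and a1: "gd_adj D oT tA tB" and a2: "gd_adj D oM mA mC" and a3: "gd_adj D oB bB bC"
    and sg1: "(oM = gpos D tA) = (oB = gpos D tB)" and sg2: "(oT = gpos D tB) = (oM = gpos D mC)"
    and E: "E = D\<lparr>gund := map_option (Transposition.transpose tA tB \<circ> Transposition.transpose mA mC \<circ> Transposition.transpose bB bC) \<circ> gund D \<circ> (Transposition.transpose tA tB \<circ> Transposition.transpose mA mC \<circ> Transposition.transpose bB bC),
              gpos := gpos D \<circ> (Transposition.transpose tA tB \<circ> Transposition.transpose mA mC \<circ> Transposition.transpose bB bC)\<rparr>"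
    using mv unfolding gd_R3_def Let_def by blast
  define \<tau> where "\<tau> = Transposition.transpose tA tB \<circ> Transposition.transpose mA mC \<circ> Transposition.transpose bB bC"
  define \<tau>' where "\<tau>' = Transposition.transpose (s tA) (s tB) \<circ> Transposition.transpose (s mA) (s mC) \<circ> Transposition.transpose (s bB) (s bC)"
  note w = wf_parts[OF wD]
  have hA: "tA \<in> gpts D" "tA \<noteq> 0" "mA \<in> gpts D" "mA \<noteq> 0" using w(4)[OF uA] by auto
  have hB: "tB \<in> gpts D" "tB \<noteq> 0" "bB \<in> gpts D" "bB \<noteq> 0" using w(4)[OF uB] by auto
  have hC: "mC \<in> gpts D" "mC \<noteq> 0" "bC \<in> gpts D" "bC \<noteq> 0" using w(4)[OF uC] by auto
  have ts_s[simp]: "\<tau>' (s z) = s (\<tau> z)" for z by (simp add: \<tau>_def \<tau>'_def tr_s)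
  have ts_t[simp]: "\<tau>' (t z) = t z" for z by (simp add: \<tau>'_def tr_t)
  have ts_o: "\<tau>' v = v" if "v \<notin> range s" for v using that by (simp add: \<tau>'_def tr_o)
  have tin[simp]: "\<tau> z \<in> gpts D \<longleftrightarrow> z \<in> gpts D" for z
    using hA hB hC by (simp add: \<tau>_def tr_in)
  have mo: "map_option \<tau>' (map_option s w) = map_option s (map_option \<tau> w)" for w by (cases w) auto
  have mt: "map_option \<tau>' (map_option t w) = map_option t w" for w by (cases w) auto
  have E': "E = D\<lparr>gund := map_option \<tau> \<circ> gund D \<circ> \<tau>, gpos := gpos D \<circ> \<tau>\<rparr>"
    using E by (simp add: \<tau>_def)
  define X where "X = (gl D L)\<lparr>gund := map_option \<tau>' \<circ> gund (gl D L) \<circ> \<tau>', gpos := gpos (gl D L) \<circ> \<tau>'\<rparr>"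
  show ?thesis
  proof (rule cob_via[OF wf_gl[OF wE wL]])
    show "X = (gl E L)\<lparr>gpos := gpos X\<rparr>"
    proof (rule eqI_gpos)
      show "gpts X = gpts (gl E L)" by (simp add: X_def E' gl_pts)
      show "gnxt X (s z) = gnxt (gl E L) (s z)" for z by (simp add: X_def E')
      show "gnxt X (t z) = gnxt (gl E L) (t z)" for z by (simp add: X_def E')
      show "gnxt X v = gnxt (gl E L) v" if "v \<notin> range s" "v \<notin> range t" for v
        using that by (simp add: X_def gl_other)
      show "gund X (s z) = gund (gl E L) (s z)" for z by (simp add: X_def E' mo)
      show "gund X (t z) = gund (gl E L) (t z)" for z by (simp add: X_def E' mt)
      show "gund X v = gund (gl E L) v" if "v \<notin> range s" "v \<notin> range t" for v
        using that by (simp add: X_def gl_other ts_o)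
    qed
    show "gpos X v = gpos (gl E L) v" if "gund (gl E L) v \<noteq> None" for v
    proof (cases v rule: y_cases)
      case (S z) then show ?thesis using that by (auto simp: X_def E' split: if_splits)
    next
      case (T z) then show ?thesis by (simp add: X_def E')
    next
      case O then show ?thesis using that gl_other(2)[OF O, of E L] by simp
    qed
    assume wX: "wf_gd X"
    have "gd_R3 (gl D L) X" unfolding gd_R3_def Let_def
      apply (rule exI[of _ "s tA"], rule exI[of _ "s tB"], rule exI[of _ "s mA"], rule exI[of _ "s mC"],
          rule exI[of _ "s bB"], rule exI[of _ "s bC"], rule exI[of _ oT], rule exI[of _ oM], rule exI[of _ oB])
      using ds uA uB uC a1 a2 a3 sg1 sg2 hA hB hC
      by (simp add: gl_adj_s X_def \<tau>'_def)
    then show "cob (gl D L) X 0" using cob_one_move[OF wf_gl[OF wD wL] wX] rmove_def by blast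
  qed
qed

end

context emb begin

lemma liftD_rmove:
  assumes wD: "wf_gd D" and wE: "wf_gd E" and wL: "wf_gd L" and mv: "rmove D E"
  shows "cob (gl D L) (gl E L) 0"
proof -
  have "gd_iso D E \<or> ins_plain D E \<or> gd_R1 D E \<or> gd_R2 D E \<or> gd_R3 D E" using mv by (simp add: rmove_def)
  then show ?thesis
  proof (elim disjE)
    assume "gd_iso D E"
    then have "gd_iso (gl D L) (gl E L)" using liftD_iso wD wE wL by blast
    then show ?thesis using cob_one_move[OF wf_gl[OF wD wL] wf_gl[OF wE wL]] rmove_def by blast
  qed (use liftD_ins liftD_R1 liftD_R2 liftD_R3 wD wE wL in blast)+
qed

lemma liftD_cob: "cob D E k \<Longrightarrow> wf_gd L \<Longrightarrow> cob (gl D L) (gl E L) k"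
proof (induction rule: cob.induct)
  case (cob_refl D) then show ?case using cob.cob_refl wf_gl by blast
next
  case (cob_move D E k F)
  have wE: "wf_gd E" using cob_move cob_wf by blast
  have "cob (gl E L) (gl F L) 0"
    using cob_move.hyps(3)
  proof
    assume "rmove E F" then show ?thesis using liftD_rmove wE cob_move by blast
  next
    assume "rmove F E" then show ?thesis using liftD_rmove wE cob_move cob_sym by blast
  qed
  from cob_trans[OF this cob_move.IH[OF cob_move.prems]] show ?case by simp
next
  case (cob_birth D E k F)
  have wE: "wf_gd E" using cob_birth cob_wf by blast
  have "cob (gl E L) (gl F L) 1" using liftD_birth wE cob_birth by blast
  from cob_trans[OF this cob_birth.IH[OF cob_birth.prems]] show ?case by simp
next
  case (cob_death D E k F)
  have wE: "wf_gd E" using cob_death cob_wf by blast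
  have "cob (gl E L) (gl F L) 1" using liftD_birth wE cob_death cob_sym by blast
  from cob_trans[OF this cob_death.IH[OF cob_death.prems]] show ?case by simp
next
  case (cob_saddle D E k F)
  have wE: "wf_gd E" using cob_saddle cob_wf by blast
  have "cob (gl E L) (gl F L) (-1)" using liftD_saddle wE cob_saddle by blast
  from cob_trans[OF this cob_saddle.IH[OF cob_saddle.prems]] show ?case by simp
qed

lemma liftR_iso:
  assumes wD: "wf_gd D" and wE: "wf_gd E" and wL: "wf_gd L" and iso: "gd_iso D E"
  shows "gd_iso (gl L D) (gl L E)"
proof -
  obtain f where bf: "bij f" and f0: "f 0 = 0" and fimg: "f ` gpts D = gpts E"
    and c: "\<And>x. x \<in> gpts D \<Longrightarrow> gnxt E (f x) = f (gnxt D x) \<and> gund E (f x) = map_option f (gund D x)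
        \<and> (gund D x \<noteq> None \<longrightarrow> gpos E (f x) = gpos D x)"
    using iso unfolding gd_iso_def by blast
  have finj: "f a = f b \<longleftrightarrow> a = b" for a b using bf by (metis bij_def injD)
  have fz: "f a = 0 \<longleftrightarrow> a = 0" for a using finj[of a 0] f0 by simp
  define g where "g y = (if y \<in> range t then t (f (ti y)) else y)" for y
  have gt[simp]: "g (t z) = t (f z)" for z by (simp add: g_def)
  have gs[simp]: "g (s z) = s z" for z by (auto simp: g_def)
  have g0[simp]: "g 0 = 0" by (auto simp: g_def)
  have fin: "f a \<in> gpts E" if "a \<in> gpts D" for a using fimg that by blast
  have inj: "inj_on g (gpts (gl L D))"
  proof (rule inj_onI)
    fix x y assume "x \<in> gpts (gl L D)" "y \<in> gpts (gl L D)" "g x = g y"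
    then show "x = y" by (auto simp: gl_pts finj)
  qed
  have img: "g ` gpts (gl L D) = gpts (gl L E)"
  proof -
    have "g ` gpts (gl L D) = (g \<circ> s) ` gpts L \<union> (g \<circ> t) ` gpts D" by (simp add: gl_pts image_Un image_comp)
    also have "(g \<circ> t) ` gpts D = t ` f ` gpts D" by (auto simp: image_iff)
    also have "(g \<circ> s) ` gpts L = s ` gpts L" by (auto simp: image_iff)
    finally show ?thesis using fimg by (simp add: gl_pts)
  qed
  have mo: "map_option g (map_option t w) = map_option t (map_option f w)" for w by (cases w) auto
  have mt: "map_option g (map_option s w) = map_option s w" for w by (cases w) auto
  show ?thesis
  proof (rule iso_intro[OF wf_gl[OF wL wD] inj g0 img])
    fix x assume "x \<in> gpts (gl L D)"
    then consider (a) a where "a \<in> gpts D" "x = t a" | (b) b where "b \<in> gpts L" "x = s b"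
      by (auto simp: gl_pts)
    then show "gnxt (gl L E) (g x) = g (gnxt (gl L D) x) \<and> gund (gl L E) (g x) = map_option g (gund (gl L D) x)
        \<and> (gund (gl L D) x \<noteq> None \<longrightarrow> gpos (gl L E) (g x) = gpos (gl L D) x)"
    proof cases
      case a
      then show ?thesis using c[OF a(1)] fin[OF a(1)] by (simp add: fz mo)
    next
      case b
      then show ?thesis using f0 by (simp add: mt)
    qed
  qed
qed

lemma gl_adj_t:
  assumes "u \<in> gpts D" "v \<in> gpts D" "u \<noteq> 0" "v \<noteq> 0"
  shows "gd_adj (gl L D) o' (t u) (t v) \<longleftrightarrow> gd_adj D o' u v"
  using assms by (auto simp: gd_adj_def)

lemma trR_t: "Transposition.transpose (t a) (t b) (t z) = t (Transposition.transpose a b z)"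
  by (simp add: transpose_def)
lemma trR_s: "Transposition.transpose (t a) (t b) (s z) = s z"
  by (simp add: transpose_def)
lemma trR_o: "v \<notin> range t \<Longrightarrow> Transposition.transpose (t a) (t b) v = v"
  by (auto simp: transpose_def)

lemma liftR_ins:
  assumes wD: "wf_gd D" and wE: "wf_gd E" and wL: "wf_gd L" and mv: "ins_plain D E"
  shows "cob (gl L D) (gl L E) 0"
proof -
  obtain x p where x: "x \<in> gpts D" and p: "p \<notin> gpts D"
    and E: "E = D\<lparr>gpts := insert p (gpts D), gnxt := (gnxt D)(x := p, p := gnxt D x)\<rparr>"
    using mv unfolding ins_plain_def by blast
  note w = wf_parts[OF wD]
  have p0: "p \<noteq> 0" using w(2) p by metis
  have xp: "x \<noteq> p" using p x by metis
  have up: "gund D p = None" using w(9) p .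
  define X where "X = (gl L D)\<lparr>gpts := insert (t p) (gpts (gl L D)),
      gnxt := (gnxt (gl L D))(t x := t p, t p := gnxt (gl L D) (t x))\<rparr>"
  show ?thesis
  proof (rule cob_via[OF wf_gl[OF wL wE]])
    show "X = (gl L E)\<lparr>gpos := gpos X\<rparr>"
    proof (rule eqI_gpos)
      show "gpts X = gpts (gl L E)" by (simp add: X_def E gl_pts)
      show "gnxt X (s z) = gnxt (gl L E) (s z)" for z using x p p0 xp by (simp add: X_def E)
      show "gnxt X (t z) = gnxt (gl L E) (t z)" for z using x p p0 xp by (simp add: X_def E)
      show "gnxt X v = gnxt (gl L E) v" if "v \<notin> range s" "v \<notin> range t" for v
        using that by (auto simp: X_def gl_other)
      show "gund X (s z) = gund (gl L E) (s z)" for z using up by (simp add: X_def E)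
      show "gund X (t z) = gund (gl L E) (t z)" for z using up by (simp add: X_def E)
      show "gund X v = gund (gl L E) v" if "v \<notin> range s" "v \<notin> range t" for v
        using that by (simp add: X_def gl_other)
    qed
    show "gpos X y = gpos (gl L E) y" if "gund (gl L E) y \<noteq> None" for y
    proof (cases y rule: y_cases)
      case (S z) then show ?thesis using that by (auto simp: X_def E up split: if_splits)
    next
      case (T z) then show ?thesis using that by (auto simp: X_def E up split: if_splits)
    next
      case O then show ?thesis using that gl_other(2)[OF O, of L E] by simp
    qed
    assume wX: "wf_gd X"
    have "ins_plain (gl L D) X" unfolding ins_plain_def
      by (rule exI[of _ "t x"], rule exI[of _ "t p"]) (simp add: X_def gl_pts x p)
    then show "cob (gl L D) X 0" using cob_one_move[OF wf_gl[OF wL wD] wX] rmove_def by blast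
  qed
qed

lemma liftR_birth:
  assumes wD: "wf_gd D" and wE: "wf_gd E" and wL: "wf_gd L" and mv: "gd_birth D E"
  shows "cob (gl L D) (gl L E) 1"
proof -
  obtain p where p: "p \<notin> gpts D" and E: "E = D\<lparr>gpts := insert p (gpts D)\<rparr>"
    using mv unfolding gd_birth_def by blast
  note w = wf_parts[OF wD]
  have p0: "p \<noteq> 0" using w(2) p by metis
  have up: "gund D p = None" using w(9) p .
  have np: "gnxt D p = p" using w(8) p .
  define X where "X = (gl L D)\<lparr>gpts := insert (t p) (gpts (gl L D))\<rparr>"
  show ?thesis
  proof (rule cob_via[OF wf_gl[OF wL wE]])
    show "X = (gl L E)\<lparr>gpos := gpos X\<rparr>"
    proof (rule eqI_gpos)
      show "gpts X = gpts (gl L E)" by (simp add: X_def E gl_pts)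
    qed (auto simp: X_def E p0 p up np gl_other)
    show "gpos X y = gpos (gl L E) y" if "gund (gl L E) y \<noteq> None" for y
    proof (cases y rule: y_cases)
      case (S z) then show ?thesis using that by (auto simp: X_def E up split: if_splits)
    next
      case (T z) then show ?thesis using that by (auto simp: X_def E up split: if_splits)
    next
      case O then show ?thesis using that gl_other(2)[OF O, of L E] by simp
    qed
    assume wX: "wf_gd X"
    have "gd_birth (gl L D) X" unfolding gd_birth_def
      by (rule exI[of _ "t p"]) (simp add: X_def gl_pts p)
    then show "cob (gl L D) X 1" using cob_one_birth[OF wf_gl[OF wL wD] wX] by blast
  qed
qed

lemma liftR_saddle:
  assumes wD: "wf_gd D" and wE: "wf_gd E" and wL: "wf_gd L" and mv: "gd_saddle D E"
  shows "cob (gl L D) (gl L E) (-1)"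
proof -
  obtain x y where x: "x \<in> gpts D" and y: "y \<in> gpts D" and xy: "x \<noteq> y"
    and E: "E = D\<lparr>gnxt := (gnxt D)(x := gnxt D y, y := gnxt D x)\<rparr>"
    using mv unfolding gd_saddle_def by blast
  define X where "X = (gl L D)\<lparr>gnxt := (gnxt (gl L D))(t x := gnxt (gl L D) (t y), t y := gnxt (gl L D) (t x))\<rparr>"
  show ?thesis
  proof (rule cob_via[OF wf_gl[OF wL wE]])
    show "X = (gl L E)\<lparr>gpos := gpos X\<rparr>"
    proof (rule eqI_gpos)
      show "gpts X = gpts (gl L E)" by (simp add: X_def E gl_pts)
    qed (auto simp: X_def E x y xy gl_other)
    show "gpos X v = gpos (gl L E) v" if "gund (gl L E) v \<noteq> None" for v
      using glR_gpos_eq[of E D L] by (simp add: X_def E)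
    assume wX: "wf_gd X"
    have "gd_saddle (gl L D) X" unfolding gd_saddle_def
      by (rule exI[of _ "t x"], rule exI[of _ "t y"]) (simp add: X_def gl_pts x y xy)
    then show "cob (gl L D) X (-1)" using cob_one_saddle[OF wf_gl[OF wL wD] wX] by blast
  qed
qed


lemma liftR_R1:
  assumes wD: "wf_gd D" and wE: "wf_gd E" and wL: "wf_gd L" and mv: "gd_R1 D E"
  shows "cob (gl L D) (gl L E) 0"
proof -
  obtain x y where xy: "gund D x = Some y" and adj: "gnxt D x = y \<or> gnxt D y = x"
    and E: "E = D\<lparr>gund := (gund D)(x := None)\<rparr>"
    using mv unfolding gd_R1_def by blast
  note w = wf_parts[OF wD]
  have h: "x \<in> gpts D" "x \<noteq> 0" "y \<in> gpts D" "y \<noteq> 0" using w(4)[OF xy] by auto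
  define X where "X = (gl L D)\<lparr>gund := (gund (gl L D))(t x := None)\<rparr>"
  show ?thesis
  proof (rule cob_via[OF wf_gl[OF wL wE]])
    show "X = (gl L E)\<lparr>gpos := gpos X\<rparr>"
    proof (rule eqI_gpos)
      show "gpts X = gpts (gl L E)" by (simp add: X_def E gl_pts)
      show "gnxt X (s z) = gnxt (gl L E) (s z)" for z by (simp add: X_def E)
      show "gnxt X (t z) = gnxt (gl L E) (t z)" for z by (simp add: X_def E)
      show "gnxt X v = gnxt (gl L E) v" if "v \<notin> range s" "v \<notin> range t" for v
        using that by (simp add: X_def gl_other)
      show "gund X (s z) = gund (gl L E) (s z)" for z by (simp add: X_def E)
      show "gund X (t z) = gund (gl L E) (t z)" for z by (simp add: X_def E)
      show "gund X v = gund (gl L E) v" if "v \<notin> range s" "v \<notin> range t" for v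
        using that by (auto simp: X_def gl_other)
    qed
    show "gpos X v = gpos (gl L E) v" if "gund (gl L E) v \<noteq> None" for v
      using glR_gpos_eq[of E D L] by (simp add: X_def E)
    assume wX: "wf_gd X"
    have "gd_R1 (gl L D) X" unfolding gd_R1_def
      by (rule exI[of _ "t x"], rule exI[of _ "t y"]) (use h xy adj in \<open>auto simp: X_def\<close>)
    then show "cob (gl L D) X 0" using cob_one_move[OF wf_gl[OF wL wD] wX] rmove_def by blast
  qed
qed

lemma liftR_R2:
  assumes wD: "wf_gd D" and wE: "wf_gd E" and wL: "wf_gd L" and mv: "gd_R2 D E"
  shows "cob (gl L D) (gl L E) 0"
proof -
  obtain x1 x2 y1 y2 where u1: "gund D x1 = Some y1" and u2: "gund D x2 = Some y2"
    and n1: "gnxt D x1 = x2" and n2: "gnxt D y1 = y2 \<or> gnxt D y2 = y1" and sg: "gpos D x1 \<noteq> gpos D x2"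
    and E: "E = D\<lparr>gund := (gund D)(x1 := None, x2 := None)\<rparr>"
    using mv unfolding gd_R2_def by blast
  note w = wf_parts[OF wD]
  have h: "x1 \<in> gpts D" "x1 \<noteq> 0" "y1 \<in> gpts D" "y1 \<noteq> 0" using w(4)[OF u1] by auto
  have h2: "x2 \<in> gpts D" "x2 \<noteq> 0" "y2 \<in> gpts D" "y2 \<noteq> 0" using w(4)[OF u2] by auto
  define X where "X = (gl L D)\<lparr>gund := (gund (gl L D))(t x1 := None, t x2 := None)\<rparr>"
  show ?thesis
  proof (rule cob_via[OF wf_gl[OF wL wE]])
    show "X = (gl L E)\<lparr>gpos := gpos X\<rparr>"
    proof (rule eqI_gpos)
      show "gpts X = gpts (gl L E)" by (simp add: X_def E gl_pts)
      show "gnxt X (s z) = gnxt (gl L E) (s z)" for z by (simp add: X_def E)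
      show "gnxt X (t z) = gnxt (gl L E) (t z)" for z by (simp add: X_def E)
      show "gnxt X v = gnxt (gl L E) v" if "v \<notin> range s" "v \<notin> range t" for v
        using that by (simp add: X_def gl_other)
      show "gund X (s z) = gund (gl L E) (s z)" for z by (simp add: X_def E)
      show "gund X (t z) = gund (gl L E) (t z)" for z by (simp add: X_def E)
      show "gund X v = gund (gl L E) v" if "v \<notin> range s" "v \<notin> range t" for v
        using that by (auto simp: X_def gl_other)
    qed
    show "gpos X v = gpos (gl L E) v" if "gund (gl L E) v \<noteq> None" for v
      using glR_gpos_eq[of E D L] by (simp add: X_def E)
    assume wX: "wf_gd X"
    have "gd_R2 (gl L D) X" unfolding gd_R2_def
      by (rule exI[of _ "t x1"], rule exI[of _ "t x2"], rule exI[of _ "t y1"], rule exI[of _ "t y2"])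
         (use h h2 u1 u2 n1 n2 sg in \<open>auto simp: X_def\<close>)
    then show "cob (gl L D) X 0" using cob_one_move[OF wf_gl[OF wL wD] wX] rmove_def by blast
  qed
qed

lemma liftR_R3:
  assumes wD: "wf_gd D" and wE: "wf_gd E" and wL: "wf_gd L" and mv: "gd_R3 D E"
  shows "cob (gl L D) (gl L E) 0"
proof -
  obtain tA tB mA mC bB bC oT oM oB where ds: "distinct [tA, tB, mC]"
    and uA: "gund D tA = Some mA" and uB: "gund D tB = Some bB" and uC: "gund D mC = Some bC"
    and a1: "gd_adj D oT tA tB" and a2: "gd_adj D oM mA mC" and a3: "gd_adj D oB bB bC"
    and sg1: "(oM = gpos D tA) = (oB = gpos D tB)" and sg2: "(oT = gpos D tB) = (oM = gpos D mC)"
    and E: "E = D\<lparr>gund := map_option (Transposition.transpose tA tB \<circ> Transposition.transpose mA mC \<circ> Transposition.transpose bB bC) \<circ> gund D \<circ> (Transposition.transpose tA tB \<circ> Transposition.transpose mA mC \<circ> Transposition.transpose bB bC),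
              gpos := gpos D \<circ> (Transposition.transpose tA tB \<circ> Transposition.transpose mA mC \<circ> Transposition.transpose bB bC)\<rparr>"
    using mv unfolding gd_R3_def Let_def by blast
  define \<tau> where "\<tau> = Transposition.transpose tA tB \<circ> Transposition.transpose mA mC \<circ> Transposition.transpose bB bC"
  define \<tau>' where "\<tau>' = Transposition.transpose (t tA) (t tB) \<circ> Transposition.transpose (t mA) (t mC) \<circ> Transposition.transpose (t bB) (t bC)"
  note w = wf_parts[OF wD]
  have hA: "tA \<in> gpts D" "tA \<noteq> 0" "mA \<in> gpts D" "mA \<noteq> 0" using w(4)[OF uA] by auto
  have hB: "tB \<in> gpts D" "tB \<noteq> 0" "bB \<in> gpts D" "bB \<noteq> 0" using w(4)[OF uB] by auto
  have hC: "mC \<in> gpts D" "mC \<noteq> 0" "bC \<in> gpts D" "bC \<noteq> 0" using w(4)[OF uC] by auto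
  have ts_s[simp]: "\<tau>' (t z) = t (\<tau> z)" for z by (simp add: \<tau>_def \<tau>'_def trR_t)
  have ts_t[simp]: "\<tau>' (s z) = s z" for z by (simp add: \<tau>'_def trR_s)
  have ts_o: "\<tau>' v = v" if "v \<notin> range t" for v using that by (simp add: \<tau>'_def trR_o)
  have tin[simp]: "\<tau> z \<in> gpts D \<longleftrightarrow> z \<in> gpts D" for z
    using hA hB hC by (simp add: \<tau>_def tr_in)
  have mt: "map_option \<tau>' (map_option t w) = map_option t (map_option \<tau> w)" for w by (cases w) auto
  have mo: "map_option \<tau>' (map_option s w) = map_option s w" for w by (cases w) auto
  have E': "E = D\<lparr>gund := map_option \<tau> \<circ> gund D \<circ> \<tau>, gpos := gpos D \<circ> \<tau>\<rparr>"
    using E by (simp add: \<tau>_def)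
  define X where "X = (gl L D)\<lparr>gund := map_option \<tau>' \<circ> gund (gl L D) \<circ> \<tau>', gpos := gpos (gl L D) \<circ> \<tau>'\<rparr>"
  show ?thesis
  proof (rule cob_via[OF wf_gl[OF wL wE]])
    show "X = (gl L E)\<lparr>gpos := gpos X\<rparr>"
    proof (rule eqI_gpos)
      show "gpts X = gpts (gl L E)" by (simp add: X_def E' gl_pts)
      show "gnxt X (s z) = gnxt (gl L E) (s z)" for z by (simp add: X_def E')
      show "gnxt X (t z) = gnxt (gl L E) (t z)" for z by (simp add: X_def E')
      show "gnxt X v = gnxt (gl L E) v" if "v \<notin> range s" "v \<notin> range t" for v
        using that by (simp add: X_def gl_other)
      show "gund X (s z) = gund (gl L E) (s z)" for z by (simp add: X_def E' mo)
      show "gund X (t z) = gund (gl L E) (t z)" for z by (simp add: X_def E' mt)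
      show "gund X v = gund (gl L E) v" if "v \<notin> range s" "v \<notin> range t" for v
        using that by (simp add: X_def gl_other ts_o)
    qed
    show "gpos X v = gpos (gl L E) v" if "gund (gl L E) v \<noteq> None" for v
    proof (cases v rule: y_cases)
      case (S z) then show ?thesis using that by (auto simp: X_def E' split: if_splits)
    next
      case (T z) then show ?thesis by (simp add: X_def E')
    next
      case O then show ?thesis using that gl_other(2)[OF O, of L E] by simp
    qed
    assume wX: "wf_gd X"
    have "gd_R3 (gl L D) X" unfolding gd_R3_def Let_def
      apply (rule exI[of _ "t tA"], rule exI[of _ "t tB"], rule exI[of _ "t mA"], rule exI[of _ "t mC"],
          rule exI[of _ "t bB"], rule exI[of _ "t bC"], rule exI[of _ oT], rule exI[of _ oM], rule exI[of _ oB])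
      using ds uA uB uC a1 a2 a3 sg1 sg2 hA hB hC
      by (simp add: gl_adj_t X_def \<tau>'_def)
    then show "cob (gl L D) X 0" using cob_one_move[OF wf_gl[OF wL wD] wX] rmove_def by blast
  qed
qed


lemma liftR_rmove:
  assumes wD: "wf_gd D" and wE: "wf_gd E" and wL: "wf_gd L" and mv: "rmove D E"
  shows "cob (gl L D) (gl L E) 0"
proof -
  have "gd_iso D E \<or> ins_plain D E \<or> gd_R1 D E \<or> gd_R2 D E \<or> gd_R3 D E" using mv by (simp add: rmove_def)
  then show ?thesis
  proof (elim disjE)
    assume "gd_iso D E"
    then have "gd_iso (gl L D) (gl L E)" using liftR_iso wD wE wL by blast
    then show ?thesis using cob_one_move[OF wf_gl[OF wL wD] wf_gl[OF wL wE]] rmove_def by blast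
  qed (use liftR_ins liftR_R1 liftR_R2 liftR_R3 wD wE wL in blast)+
qed

lemma liftR_cob: "cob D E k \<Longrightarrow> wf_gd L \<Longrightarrow> cob (gl L D) (gl L E) k"
proof (induction rule: cob.induct)
  case (cob_refl D) then show ?case using cob.cob_refl wf_gl by blast
next
  case (cob_move D E k F)
  have wE: "wf_gd E" using cob_move cob_wf by blast
  have "cob (gl L E) (gl L F) 0"
    using cob_move.hyps(3)
  proof
    assume "rmove E F" then show ?thesis using liftR_rmove wE cob_move by blast
  next
    assume "rmove F E" then show ?thesis using liftR_rmove wE cob_move cob_sym by blast
  qed
  from cob_trans[OF this cob_move.IH[OF cob_move.prems]] show ?case by simp
next
  case (cob_birth D E k F)
  have wE: "wf_gd E" using cob_birth cob_wf by blast
  have "cob (gl L E) (gl L F) 1" using liftR_birth wE cob_birth by blast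
  from cob_trans[OF this cob_birth.IH[OF cob_birth.prems]] show ?case by simp
next
  case (cob_death D E k F)
  have wE: "wf_gd E" using cob_death cob_wf by blast
  have "cob (gl L E) (gl L F) 1" using liftR_birth wE cob_death cob_sym by blast
  from cob_trans[OF this cob_death.IH[OF cob_death.prems]] show ?case by simp
next
  case (cob_saddle D E k F)
  have wE: "wf_gd E" using cob_saddle cob_wf by blast
  have "cob (gl L E) (gl L F) (-1)" using liftR_saddle wE cob_saddle by blast
  from cob_trans[OF this cob_saddle.IH[OF cob_saddle.prems]] show ?case by simp
qed


end

interpretation e2: emb "\<lambda>z. 2*z" "\<lambda>z. 2*z+1" "\<lambda>x. x div 2" "\<lambda>x. x div 2"
  by unfold_locales presburger+

lemma concat_glue: "lk_concat D L = glue D L id id (\<lambda>z. z + Suc (Max (gpts D))) (\<lambda>x. x - Suc (Max (gpts D)))"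
proof -
  define N where "N = Suc (Max (gpts D))"
  have mem: "(x \<in> (\<lambda>z. z + N) ` gpts L) = (N \<le> x \<and> x - N \<in> gpts L)" for x
  proof
    assume "x \<in> (\<lambda>z. z + N) ` gpts L" then show "N \<le> x \<and> x - N \<in> gpts L" by auto
  next
    assume h: "N \<le> x \<and> x - N \<in> gpts L"
    then have "x = (x - N) + N" by simp
    then show "x \<in> (\<lambda>z. z + N) ` gpts L" using h by blast
  qed
  show ?thesis unfolding lk_concat_def glue_def Let_def N_def[symmetric] mem id_def
    by (simp add: option.map_ident fun_eq_iff)
qed

lemma concat_ok:
  assumes "wf_gd D" "wf_gd L"
  shows "glue_ok D L id id (\<lambda>z. z + Suc (Max (gpts D))) (\<lambda>x. x - Suc (Max (gpts D)))"
proof -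
  have "finite (gpts D)" using wf_parts(1)[OF assms(1)] .
  then have "a \<le> Max (gpts D)" if "a \<in> gpts D" for a using that by simp
  then have "id ` gpts D \<inter> (\<lambda>z. z + Suc (Max (gpts D))) ` gpts L = {}" by fastforce
  then show ?thesis using assms unfolding glue_ok_def by simp
qed

lemma concat_wf: "wf_gd D \<Longrightarrow> wf_gd L \<Longrightarrow> wf_gd (lk_concat D L)"
  unfolding concat_glue by (rule wf_glue[OF concat_ok])

lemma concat_lk: "long_knot D \<Longrightarrow> long_knot L \<Longrightarrow> long_knot (lk_concat D L)"
  unfolding concat_glue by (rule long_knot_glue[OF concat_ok]) (auto simp: long_knot_def)

lemma concat_iso: "wf_gd D \<Longrightarrow> wf_gd L \<Longrightarrow> gd_iso (lk_concat D L) (e2.gl D L)"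
  unfolding concat_glue e2.gl_def by (rule glue_iso[OF concat_ok e2.gl_ok])

lemma concat_cob_gl: "wf_gd D \<Longrightarrow> wf_gd L \<Longrightarrow> cob (lk_concat D L) (e2.gl D L) 0"
  using cob_one_move[OF concat_wf e2.wf_gl] concat_iso rmove_def by blast

lemma concat_left: "cob D E k \<Longrightarrow> wf_gd L \<Longrightarrow> cob (lk_concat D L) (lk_concat E L) k"
proof -
  assume c: "cob D E k" and wL: "wf_gd L"
  have wD: "wf_gd D" and wE: "wf_gd E" using cob_wf[OF c] by auto
  have 1: "cob (lk_concat D L) (e2.gl D L) 0" using concat_cob_gl wD wL by blast
  have 2: "cob (e2.gl D L) (e2.gl E L) k" using e2.liftD_cob c wL by blast
  have 3: "cob (e2.gl E L) (lk_concat E L) 0" using concat_cob_gl wE wL cob_sym by blast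
  show ?thesis using cob_trans[OF 3 cob_trans[OF 2 1]] by simp
qed

lemma concat_right: "cob D E k \<Longrightarrow> wf_gd L \<Longrightarrow> cob (lk_concat L D) (lk_concat L E) k"
proof -
  assume c: "cob D E k" and wL: "wf_gd L"
  have wD: "wf_gd D" and wE: "wf_gd E" using cob_wf[OF c] by auto
  have 1: "cob (lk_concat L D) (e2.gl L D) 0" using concat_cob_gl wD wL by blast
  have 2: "cob (e2.gl L D) (e2.gl L E) k" using e2.liftR_cob c wL by blast
  have 3: "cob (e2.gl L E) (lk_concat L E) 0" using concat_cob_gl wE wL cob_sym by blast
  show ?thesis using cob_trans[OF 3 cob_trans[OF 2 1]] by simp
qed

lemma concat_conc:
  assumes "concordant K1 K2" "concordant L1 L2"
  shows "concordant (lk_concat K1 L1) (lk_concat K2 L2)"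
proof -
  have l: "long_knot K1" "long_knot K2" "long_knot L1" "long_knot L2" "cob K1 K2 0" "cob L1 L2 0"
    using assms by (auto simp: concordant_def)
  have w: "wf_gd K2" "wf_gd L1" using l by (auto simp: long_knot_def)
  have "cob (lk_concat K1 L1) (lk_concat K2 L1) 0" using concat_left[OF l(5) w(2)] .
  moreover have "cob (lk_concat K2 L1) (lk_concat K2 L2) 0" using concat_right[OF l(6) w(1)] .
  ultimately have "cob (lk_concat K1 L1) (lk_concat K2 L2) 0" using cob_trans by fastforce
  then show ?thesis unfolding concordant_def using concat_lk l by blast
qed

context emb begin

lemma gl_pts_s[simp]: "s z \<in> gpts (gl D L) \<longleftrightarrow> z \<in> gpts D" by (auto simp: gl_pts)
lemma gl_pts_t[simp]: "t z \<in> gpts (gl D L) \<longleftrightarrow> z \<in> gpts L" by (auto simp: gl_pts)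

lemma gl_assoc:
  assumes wa: "wf_gd A" and wb: "wf_gd B" and wc: "wf_gd C"
  shows "gd_iso (gl (gl A B) C) (gl A (gl B C))"
proof -
  define f where "f y = (if y \<in> range s then (if si y \<in> range s then s (si (si y)) else t (s (ti (si y))))
     else t (t (ti y)))" for y
  have f1[simp]: "f (s (s z)) = s z" for z by (simp add: f_def)
  have f2[simp]: "f (s (t z)) = t (s z)" for z by (auto simp: f_def)
  have f3[simp]: "f (t z) = t (t z)" for z by (auto simp: f_def)
  have f0: "f 0 = 0" using f1[of 0] by simp
  note wA = wf_parts[OF wa] and wB = wf_parts[OF wb] and wC = wf_parts[OF wc]
  have pL: "gpts (gl (gl A B) C) = s ` s ` gpts A \<union> s ` t ` gpts B \<union> t ` gpts C"
    by (simp add: gl_pts image_Un)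
  have pR: "gpts (gl A (gl B C)) = s ` gpts A \<union> t ` s ` gpts B \<union> t ` t ` gpts C"
    by (simp add: gl_pts image_Un Un_assoc)
  have inj: "inj_on f (gpts (gl (gl A B) C))"
  proof (rule inj_onI)
    fix x y assume "x \<in> gpts (gl (gl A B) C)" "y \<in> gpts (gl (gl A B) C)" "f x = f y"
    then show "x = y" unfolding pL by auto
  qed
  have img: "f ` gpts (gl (gl A B) C) = gpts (gl A (gl B C))"
    unfolding pL pR image_Un image_image by simp
  have m1: "map_option f (map_option s (map_option s w)) = map_option s w" for w by (cases w) auto
  have m2: "map_option f (map_option s (map_option t w)) = map_option t (map_option s w)" for w by (cases w) auto
  have m3: "map_option f (map_option t w) = map_option t (map_option t w)" for w by (cases w) auto
  show ?thesis
  proof (rule iso_intro[OF wf_gl[OF wf_gl[OF wa wb] wc] inj f0 img])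
    fix x assume "x \<in> gpts (gl (gl A B) C)"
    then consider (a) z where "z \<in> gpts A" "x = s (s z)" | (b) z where "z \<in> gpts B" "x = s (t z)"
      | (c) z where "z \<in> gpts C" "x = t z"
      unfolding pL by blast
    then show "gnxt (gl A (gl B C)) (f x) = f (gnxt (gl (gl A B) C) x) \<and>
         gund (gl A (gl B C)) (f x) = map_option f (gund (gl (gl A B) C) x) \<and>
         (gund (gl (gl A B) C) x \<noteq> None \<longrightarrow> gpos (gl A (gl B C)) (f x) = gpos (gl (gl A B) C) x)"
    proof cases
      case a then show ?thesis using wA(7)[OF a(1)] by (simp add: m1)
    next
      case b then show ?thesis using wB(7)[OF b(1)] by (simp add: m2)
    next
      case c then show ?thesis using wC(7)[OF c(1)] f0 by (simp add: m3)
    qed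
  qed
qed

end

lemma permutes_remove: "f permutes S \<Longrightarrow> f p = p \<Longrightarrow> f permutes (S - {p})"
  unfolding permutes_def by (metis Diff_iff singletonD)

lemma upd_transpose: "x \<noteq> y \<Longrightarrow> (f::'a\<Rightarrow>'a)(x := f y, y := f x) = f \<circ> Transposition.transpose x y"
  by (auto simp: fun_eq_iff transpose_def)

lemma wf_und_sub:
  assumes w: "wf_gd D" and g: "\<And>v. g v = None \<or> g v = gund D v"
  shows "wf_gd (D\<lparr>gund := g\<rparr>)"
proof -
  have dm: "dom g \<subseteq> dom (gund D)" using g by (auto simp: dom_def) (metis option.distinct(1))
  have rn: "ran g \<subseteq> ran (gund D)" using g by (auto simp: ran_def) (metis option.distinct(1))
  have "inj_on (gund D) (dom (gund D))" using w by (simp add: wf_gd_def)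
  then have ij: "inj_on g (dom g)"
    unfolding inj_on_def using g dm by (metis domD domI option.distinct(1))
  have "dom (gund D) \<inter> ran (gund D) = {}" using w by (simp add: wf_gd_def)
  then have dj: "dom g \<inter> ran g = {}" using dm rn by blast
  show ?thesis using w dm rn ij dj unfolding wf_gd_def by (simp, blast)
qed

lemma wf_saddle:
  assumes w: "wf_gd D" and x: "x \<in> gpts D" and y: "y \<in> gpts D"
  shows "wf_gd (D\<lparr>gnxt := gnxt D \<circ> Transposition.transpose x y\<rparr>)"
proof -
  have "gnxt D permutes gpts D" using w by (simp add: wf_gd_def)
  then have "gnxt D \<circ> Transposition.transpose x y permutes gpts D"
    using permutes_compose[OF permutes_swap_id[OF x y]] by blast
  then show ?thesis using w unfolding wf_gd_def by simp
qed

lemma cob_saddle_step: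
  assumes w: "wf_gd D" and x: "x \<in> gpts D" and y: "y \<in> gpts D" and xy: "x \<noteq> y"
  shows "cob D (D\<lparr>gnxt := gnxt D \<circ> Transposition.transpose x y\<rparr>) (-1)"
proof (rule cob_one_saddle[OF w wf_saddle[OF w x y]])
  show "gd_saddle D (D\<lparr>gnxt := gnxt D \<circ> Transposition.transpose x y\<rparr>)"
    unfolding gd_saddle_def using x y xy by (intro exI[of _ x] exI[of _ y]) (simp add: upd_transpose)
qed

lemma cob_remove_plain:
  assumes w: "wf_gd E" and xp: "gnxt E x = p" and p: "p \<in> gpts E" and p0: "p \<noteq> 0" and px: "p \<noteq> x"
    and u1: "gund E p = None" and u2: "\<And>v. gund E v \<noteq> Some p"
  shows "cob E (E\<lparr>gpts := gpts E - {p}, gnxt := (gnxt E)(x := gnxt E p, p := p)\<rparr>) 0"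
proof -
  let ?D = "E\<lparr>gpts := gpts E - {p}, gnxt := (gnxt E)(x := gnxt E p, p := p)\<rparr>"
  note wE = wf_parts[OF w]
  have xin: "x \<in> gpts E" using wE(8) xp px by metis
  have eqf: "(gnxt E)(x := gnxt E p, p := p) = gnxt E \<circ> Transposition.transpose x p"
    using upd_transpose[of x p "gnxt E"] px xp by (simp add: fun_upd_twist)
  have "gnxt E \<circ> Transposition.transpose x p permutes gpts E"
    using permutes_compose[OF permutes_swap_id[OF xin p]] wE(3) by blast
  moreover have "(gnxt E \<circ> Transposition.transpose x p) p = p" using xp by simp
  ultimately have perm: "gnxt ?D permutes gpts ?D" using eqf by (simp add: permutes_remove)
  have wD: "wf_gd ?D"
  proof -
    have "dom (gund E) \<subseteq> gpts E - {0}" "ran (gund E) \<subseteq> gpts E - {0}"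
      "finite (gpts E)" "0 \<in> gpts E" "inj_on (gund E) (dom (gund E))" "dom (gund E) \<inter> ran (gund E) = {}"
      using w by (auto simp: wf_gd_def)
    moreover have "p \<notin> dom (gund E)" "p \<notin> ran (gund E)" using u1 u2 by (auto simp: ran_def)
    ultimately show ?thesis using perm p0 unfolding wf_gd_def by auto
  qed
  have "ins_plain ?D E" unfolding ins_plain_def
  proof (intro exI conjI)
    show "x \<in> gpts ?D" using xin px by simp
    show "p \<notin> gpts ?D" by simp
    show "E = ?D\<lparr>gpts := insert p (gpts ?D), gnxt := (gnxt ?D)(x := p, p := gnxt ?D x)\<rparr>"
      using p px xp by (simp add: gdiag.equality fun_eq_iff insert_absorb)
  qed
  then show ?thesis using cob_one_move[OF w wD] rmove_def by blast
qed

lemma cob_remove_fixed: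
  assumes w: "wf_gd E" and p: "p \<in> gpts E" and p0: "p \<noteq> 0" and fx: "gnxt E p = p"
    and u1: "gund E p = None" and u2: "\<And>v. gund E v \<noteq> Some p"
  shows "cob E (E\<lparr>gpts := gpts E - {p}\<rparr>) 1"
proof -
  let ?D = "E\<lparr>gpts := gpts E - {p}\<rparr>"
  have perm: "gnxt ?D permutes gpts ?D" using w fx by (simp add: wf_gd_def permutes_remove)
  have wD: "wf_gd ?D"
  proof -
    have "dom (gund E) \<subseteq> gpts E - {0}" "ran (gund E) \<subseteq> gpts E - {0}"
      "finite (gpts E)" "0 \<in> gpts E" "inj_on (gund E) (dom (gund E))" "dom (gund E) \<inter> ran (gund E) = {}"
      using w by (auto simp: wf_gd_def)
    moreover have "p \<notin> dom (gund E)" "p \<notin> ran (gund E)" using u1 u2 by (auto simp: ran_def)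
    ultimately show ?thesis using perm p0 unfolding wf_gd_def by auto
  qed
  have "gd_birth ?D E" unfolding gd_birth_def
    by (intro exI[of _ p]) (simp add: p insert_absorb)
  then show ?thesis using cob_one_death[OF w wD] by blast
qed

lemma wf_triv: "wf_gd triv_long"
  by (simp add: wf_gd_def triv_long_def)

lemma lk_triv: "long_knot triv_long"
  by (simp add: long_knot_def wf_triv) (simp add: triv_long_def)

context emb begin

lemma gl_left_id:
  assumes wa: "wf_gd A"
  shows "cob (gl triv_long A) A 0"
proof -
  let ?G = "gl triv_long A"
  note wA = wf_parts[OF wa]
  have wG: "wf_gd ?G" using wf_gl[OF wf_triv wa] .
  have g0: "gnxt ?G 0 = t 0" using gl_s(1)[of triv_long A 0] by (simp add: triv_long_def)
  have u0: "gund ?G 0 = None" using gl_s(2)[of triv_long A 0] by (simp add: triv_long_def)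
  have pts: "gpts ?G = insert 0 (t ` gpts A)" by (simp add: gl_pts triv_long_def)
  have a0: "gund A 0 = None" using wA(4)[of 0] by (cases "gund A 0") auto
  have ut: "gund ?G (t 0) = None" using wA(2) wA(4)[of 0] by (cases "gund A 0") auto
  have un: "gund ?G v \<noteq> Some (t 0)" for v
  proof (cases v rule: y_cases)
    case (S z) then show ?thesis by (simp add: triv_long_def)
  next
    case (T z) then show ?thesis using wA(4)[of z 0] by (cases "gund A z") auto
  next
    case O then show ?thesis using gl_other(2)[OF O] by simp
  qed
  define D0 where "D0 = ?G\<lparr>gpts := gpts ?G - {t 0}, gnxt := (gnxt ?G)(0 := gnxt ?G (t 0), t 0 := t 0)\<rparr>"
  have c1: "cob ?G D0 0" unfolding D0_def
    by (rule cob_remove_plain[OF wG g0]) (simp_all add: pts un a0 wA(2))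
  have wD0: "wf_gd D0" using cob_wf[OF c1] by blast
  define f where "f z = (if z = 0 then 0 else t z)" for z
  have iso: "gd_iso A D0"
  proof (rule iso_intro[OF wa])
    show "inj_on f (gpts A)" by (auto simp: f_def inj_on_def)
    show "f 0 = 0" by (simp add: f_def)
    show "f ` gpts A = gpts D0"
    proof -
      have "f ` gpts A = insert 0 (t ` (gpts A - {0}))" using wA(2) by (auto simp: f_def image_iff)
      also have "\<dots> = gpts D0" by (auto simp: D0_def pts)
      finally show ?thesis .
    qed
    fix z assume z: "z \<in> gpts A"
    have m: "map_option f (gund A z) = map_option t (gund A z)"
      using wA(4)[of z] by (cases "gund A z") (auto simp: f_def)
    show "gnxt D0 (f z) = f (gnxt A z) \<and> gund D0 (f z) = map_option f (gund A z)
        \<and> (gund A z \<noteq> None \<longrightarrow> gpos D0 (f z) = gpos A z)"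
    proof (cases "z = 0")
      case True
      have n: "gnxt D0 0 = gnxt ?G (t 0)" by (simp add: D0_def)
      have n2: "gnxt ?G (t 0) = f (gnxt A 0)" using wA(2) by (simp add: f_def)
      have u: "gund D0 0 = None" using u0 by (simp add: D0_def)
      show ?thesis using True n n2 u a0 by (simp add: f_def)
    next
      case False
      have fz: "f z = t z" using False by (simp add: f_def)
      have n: "gnxt D0 (t z) = gnxt ?G (t z)" "gund D0 (t z) = gund ?G (t z)" "gpos D0 (t z) = gpos ?G (t z)"
        using False by (simp_all add: D0_def)
      have n2: "gnxt ?G (t z) = f (gnxt A z)" using z by (simp add: f_def)
      show ?thesis using n n2 fz z m by simp
    qed
  qed
  have "cob A D0 0" using cob_one_move[OF wa wD0] iso rmove_def by blast
  then show ?thesis using cob_trans[OF cob_sym c1] by fastforce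
qed

end

lemma concat_left_id: "long_knot A \<Longrightarrow> concordant (lk_concat triv_long A) A"
proof -
  assume l: "long_knot A"
  then have wa: "wf_gd A" by (simp add: long_knot_def)
  have "cob (lk_concat triv_long A) (e2.gl triv_long A) 0" using concat_cob_gl[OF wf_triv wa] .
  from cob_trans[OF e2.gl_left_id[OF wa] this] show ?thesis
    unfolding concordant_def using concat_lk[OF lk_triv l] l by simp
qed

lemma concat_assoc:
  assumes "long_knot A" "long_knot B" "long_knot C"
  shows "concordant (lk_concat (lk_concat A B) C) (lk_concat A (lk_concat B C))"
proof -
  have wa: "wf_gd A" and wb: "wf_gd B" and wc: "wf_gd C" using assms by (auto simp: long_knot_def)
  have wab: "wf_gd (lk_concat A B)" and wbc: "wf_gd (lk_concat B C)" using concat_wf wa wb wc by auto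
  have 1: "cob (lk_concat (lk_concat A B) C) (e2.gl (lk_concat A B) C) 0" using concat_cob_gl[OF wab wc] .
  have 2: "cob (e2.gl (lk_concat A B) C) (e2.gl (e2.gl A B) C) 0"
    using e2.liftD_cob[OF concat_cob_gl[OF wa wb] wc] .
  have 3: "cob (e2.gl (e2.gl A B) C) (e2.gl A (e2.gl B C)) 0"
    using cob_one_move[OF e2.wf_gl[OF e2.wf_gl[OF wa wb] wc] e2.wf_gl[OF wa e2.wf_gl[OF wb wc]]]
      e2.gl_assoc[OF wa wb wc] rmove_def by blast
  have 4: "cob (e2.gl A (e2.gl B C)) (e2.gl A (lk_concat B C)) 0"
    using e2.liftR_cob[OF cob_sym[OF concat_cob_gl[OF wb wc]] wa] .
  have 5: "cob (e2.gl A (lk_concat B C)) (lk_concat A (lk_concat B C)) 0"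
    using cob_sym[OF concat_cob_gl[OF wa wbc]] .
  have "cob (lk_concat (lk_concat A B) C) (lk_concat A (lk_concat B C)) 0"
    using cob_trans[OF 5 cob_trans[OF 4 cob_trans[OF 3 cob_trans[OF 2 1]]]] by simp
  then show ?thesis unfolding concordant_def using concat_lk assms by simp
qed

definition ak :: "gdiag \<Rightarrow> nat \<Rightarrow> nat" where "ak K i = (gnxt K ^^ i) 0"

context
  fixes K assumes lk: "long_knot K"
begin

lemma wfK: "wf_gd K" using lk by (simp add: long_knot_def)

lemma ak_in: "ak K i \<in> gpts K"
  unfolding ak_def by (induction i) (auto simp: wf_parts(2,7)[OF wfK])

lemma ak_per: "ak K (per K) = 0" using lk_period(2)[OF lk] by (simp add: ak_def)

lemma ak_0: "ak K 0 = 0" by (simp add: ak_def)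

lemma ak_Suc: "gnxt K (ak K i) = ak K (Suc i)" by (simp add: ak_def)

lemma ak_inj: "i < per K \<Longrightarrow> j < per K \<Longrightarrow> ak K i = ak K j \<longleftrightarrow> i = j"
proof -
  assume i: "i < per K" and j: "j < per K"
  note w = wf_parts[OF wfK]
  have "permutation (gnxt K)" using permutes_imp_permutation[OF w(1) w(3)] .
  then have orb: "0 \<in> orbit (gnxt K) 0" by (rule permutation_self_in_orbit)
  show ?thesis using funpow_neq_less_funpow_dist1[OF orb, of i j] i j by (auto simp: ak_def per_def)
qed

lemma ak_zero: "i < per K \<Longrightarrow> ak K i = 0 \<longleftrightarrow> i = 0"
  using ak_inj[of i 0] lk_period(1)[OF lk] by (simp add: ak_0)

lemma ak_surj: "x \<in> gpts K \<Longrightarrow> \<exists>i<per K. ak K i = x"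
  using lk_period(4)[OF lk] by (simp add: ak_def)

lemma ak_inv: "inv_into UNIV (gnxt K) (ak K (Suc i)) = ak K i"
proof -
  have "gnxt K permutes gpts K" using wf_parts(3)[OF wfK] .
  then show ?thesis using ak_Suc[of i] permutes_inverses(2) by metis
qed

lemma card_per: "card (gpts K) = per K"
proof -
  have "ak K ` {..<per K} = gpts K" using ak_in ak_surj by blast
  moreover have "inj_on (ak K) {..<per K}" using ak_inj by (auto simp: inj_on_def)
  ultimately show ?thesis using card_image by fastforce
qed

definition Kb :: gdiag where
  "Kb = \<lparr>gpts = gpts K, gnxt = inv_into UNIV (gnxt K), gund = gund K, gpos = (\<lambda>x. \<not> gpos K x)\<rparr>"

lemma inv_iter: "(inv_into UNIV (gnxt K) ^^ k) (ak K (i + k)) = ak K i"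
proof (induction k)
  case 0 then show ?case by simp
next
  case (Suc k)
  have "(inv_into UNIV (gnxt K) ^^ Suc k) (ak K (i + Suc k)) = (inv_into UNIV (gnxt K) ^^ k) (inv_into UNIV (gnxt K) (ak K (Suc (i + k))))"
    by (simp only: funpow_Suc_right comp_apply add_Suc_right)
  also have "\<dots> = ak K i" using ak_inv Suc by simp
  finally show ?case .
qed

lemma lk_Kb: "long_knot Kb"
proof -
  have wf: "wf_gd Kb" using wfK permutes_inv[OF wf_parts(3)[OF wfK]] by (simp add: wf_gd_def Kb_def)
  have "\<exists>n. (inv_into UNIV (gnxt K) ^^ n) 0 = x" if x: "x \<in> gpts K" for x
  proof -
    obtain i where i: "i < per K" "ak K i = x" using ak_surj[OF x] by blast
    have "(inv_into UNIV (gnxt K) ^^ (per K - i)) (ak K (i + (per K - i))) = ak K i" by (rule inv_iter)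
    then show ?thesis using i ak_per by auto
  qed
  then show ?thesis using wf by (simp add: long_knot_def Kb_def)
qed

end

context emb begin

definition G0 :: "gdiag \<Rightarrow> gdiag" where "G0 K = gl (Kb K) K"

definition D1 :: "gdiag \<Rightarrow> gdiag" where
  "D1 K = (G0 K)\<lparr>gpts := gpts (G0 K) - {t 0},
      gnxt := (gnxt (G0 K))(s (gnxt K 0) := gnxt (G0 K) (t 0), t 0 := t 0)\<rparr>"

primrec gg :: "gdiag \<Rightarrow> nat \<Rightarrow> nat \<Rightarrow> nat" where
  "gg K 0 = gnxt (D1 K)"
| "gg K (Suc j) = gg K j \<circ> Transposition.transpose (s (ak K (Suc (Suc j)))) (t (ak K (Suc j)))"

definition HH :: "gdiag \<Rightarrow> nat \<Rightarrow> gdiag" where "HH K j = (D1 K)\<lparr>gnxt := gg K j\<rparr>"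

context
  fixes K assumes lk: "long_knot K"
begin

abbreviation "nn \<equiv> per K - 1"

lemma per_eq: "per K = Suc nn" using lk_period(1)[OF lk] by simp

lemma Kb_simps[simp]: "gpts (Kb K) = gpts K" "gnxt (Kb K) = inv_into UNIV (gnxt K)" "gund (Kb K) = gund K"
  "gpos (Kb K) = (\<lambda>x. \<not> gpos K x)"
  by (simp_all add: Kb_def[OF lk])

lemma akin[simp]: "ak K i \<in> gpts K" using ak_in[OF lk] .

lemma ak_nz: "1 \<le> i \<Longrightarrow> i \<le> nn \<Longrightarrow> ak K i \<noteq> 0"
  using ak_zero[OF lk, of i] per_eq by simp

lemma ak_eq: "i \<le> nn \<Longrightarrow> j \<le> nn \<Longrightarrow> ak K i = ak K j \<longleftrightarrow> i = j"
  using ak_inj[OF lk, of i j] per_eq by simp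

lemma ak_m: "ak K (Suc nn) = 0" using ak_per[OF lk] per_eq by simp

lemma sig0: "gnxt K 0 = ak K 1" using ak_Suc[OF lk, of 0] ak_0[OF lk] by simp

lemma G0_s: "1 \<le> i \<Longrightarrow> i \<le> nn \<Longrightarrow> gnxt (G0 K) (s (ak K i)) = (if i = 1 then t 0 else s (ak K (i - 1)))"
proof -
  assume i: "1 \<le> i" "i \<le> nn"
  have "inv_into UNIV (gnxt K) (ak K i) = ak K (i - 1)" using ak_inv[OF lk, of "i - 1"] i by simp
  moreover have "ak K (i - 1) = 0 \<longleftrightarrow> i = 1" using ak_zero[OF lk, of "i - 1"] i per_eq by auto
  ultimately show ?thesis by (simp add: G0_def)
qed

lemma G0_zero: "gnxt (G0 K) 0 = (if nn = 0 then t 0 else s (ak K nn))"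
proof -
  have "inv_into UNIV (gnxt K) 0 = ak K nn" using ak_inv[OF lk, of nn] ak_m by simp
  moreover have "ak K nn = 0 \<longleftrightarrow> nn = 0" using ak_zero[OF lk, of nn] per_eq by simp
  moreover have "0 \<in> gpts K" using ak_0[OF lk] akin[of 0] by simp
  ultimately show ?thesis using gl_s(1)[of "Kb K" K 0] by (simp add: G0_def)
qed

lemma G0_t: "i \<le> nn \<Longrightarrow> gnxt (G0 K) (t (ak K i)) = (if i = nn then 0 else t (ak K (Suc i)))"
proof -
  assume i: "i \<le> nn"
  have "ak K (Suc i) = 0 \<longleftrightarrow> i = nn"
  proof (cases "i = nn")
    case True then show ?thesis using ak_m by simp
  next
    case False then show ?thesis using ak_zero[OF lk, of "Suc i"] i per_eq by simp
  qed
  then show ?thesis using ak_Suc[OF lk, of i] by (simp add: G0_def)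
qed

lemma D1_s: "1 \<le> i \<Longrightarrow> i \<le> nn \<Longrightarrow> gnxt (D1 K) (s (ak K i)) = (if i = 1 then t (ak K 1) else s (ak K (i - 1)))"
proof -
  assume i: "1 \<le> i" "i \<le> nn"
  show ?thesis
  proof (cases "i = 1")
    case True
    then have "nn \<noteq> 0" using i by simp
    then show ?thesis using True G0_t[of 0] ak_0[OF lk] by (simp add: D1_def sig0)
  next
    case False
    have "ak K i \<noteq> ak K 1" using ak_eq[of i 1] i False by simp
    then show ?thesis using False G0_s[OF i] by (simp add: D1_def sig0)
  qed
qed

lemma D1_t: "1 \<le> i \<Longrightarrow> i \<le> nn \<Longrightarrow> gnxt (D1 K) (t (ak K i)) = (if i = nn then 0 else t (ak K (Suc i)))"
proof -
  assume i: "1 \<le> i" "i \<le> nn"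
  have nz: "ak K i \<noteq> 0" using ak_nz i by simp
  have "gnxt (D1 K) (t (ak K i)) = gnxt (G0 K) (t (ak K i))" using nz by (simp add: D1_def)
  then show ?thesis using G0_t[OF i(2)] by simp
qed

lemma D1_zero: "gnxt (D1 K) 0 = (if nn = 0 then 0 else s (ak K nn))"
proof (cases "nn = 0")
  case True
  then have "ak K 1 = 0" using ak_m by simp
  then show ?thesis using True G0_t[of 0] ak_0[OF lk] by (simp add: D1_def sig0)
next
  case False
  then have "ak K 1 \<noteq> 0" using ak_nz[of 1] by simp
  then show ?thesis using False G0_zero by (simp add: D1_def sig0)
qed

lemma gg_inv:
  "j \<le> nn \<Longrightarrow> (\<forall>i. 1 \<le> i \<and> i \<le> nn \<longrightarrow> gg K j (s (ak K i)) = (if i \<le> Suc j then t (ak K i) else s (ak K (i - 1))))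
    \<and> (\<forall>i. 1 \<le> i \<and> i \<le> nn \<longrightarrow> gg K j (t (ak K i)) = (if i \<le> j then s (ak K i) else if i = nn then 0 else t (ak K (Suc i))))
    \<and> gg K j 0 = (if j = nn then 0 else s (ak K nn))"
proof (induction j)
  case 0
  then show ?case using D1_s D1_t D1_zero by auto
next
  case (Suc j)
  then have j: "Suc j \<le> nn" by simp
  from Suc.IH j have IA: "\<And>i. 1 \<le> i \<Longrightarrow> i \<le> nn \<Longrightarrow> gg K j (s (ak K i)) = (if i \<le> Suc j then t (ak K i) else s (ak K (i - 1)))"
    and IB: "\<And>i. 1 \<le> i \<Longrightarrow> i \<le> nn \<Longrightarrow> gg K j (t (ak K i)) = (if i \<le> j then s (ak K i) else if i = nn then 0 else t (ak K (Suc i)))"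
    and IC: "gg K j 0 = (if j = nn then 0 else s (ak K nn))" by auto
  define x where "x = s (ak K (Suc (Suc j)))"
  define y where "y = t (ak K (Suc j))"
  have gS: "gg K (Suc j) v = gg K j (Transposition.transpose x y v)" for v by (simp add: x_def y_def)
  have xy: "x \<noteq> y" by (simp add: x_def y_def)
  have F1: "s (ak K i) = x \<longleftrightarrow> i = Suc (Suc j)" if "1 \<le> i" "i \<le> nn" for i
  proof (cases "Suc (Suc j) \<le> nn")
    case True then show ?thesis using ak_eq[of i "Suc (Suc j)"] that by (simp add: x_def)
  next
    case False
    then have "Suc (Suc j) = Suc nn" using j by simp
    then show ?thesis using ak_m ak_nz[OF that] that by (simp add: x_def)
  qed
  have F2: "t (ak K i) = y \<longleftrightarrow> i = Suc j" if "1 \<le> i" "i \<le> nn" for i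
    using ak_eq[of i "Suc j"] that j by (simp add: y_def)
  have F3: "0 = x \<longleftrightarrow> Suc j = nn"
  proof (cases "Suc (Suc j) \<le> nn")
    case True then show ?thesis using ak_nz[OF _ True] by (simp add: x_def)
  next
    case False
    then have "Suc (Suc j) = Suc nn" using j by simp
    then show ?thesis using ak_m by (simp add: x_def)
  qed
  have gx: "gg K j x = s (ak K (Suc j))"
  proof (cases "Suc (Suc j) \<le> nn")
    case True then show ?thesis using IA[of "Suc (Suc j)"] by (simp add: x_def)
  next
    case False
    then have "Suc j = nn" using j by simp
    then have "x = 0" using F3 by simp
    then show ?thesis using IC \<open>Suc j = nn\<close> by simp
  qed
  have gy: "gg K j y = (if Suc j = nn then 0 else t (ak K (Suc (Suc j))))"
    using IB[of "Suc j"] j by (simp add: y_def)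
  have A: "gg K (Suc j) (s (ak K i)) = (if i \<le> Suc (Suc j) then t (ak K i) else s (ak K (i - 1)))"
    if i: "1 \<le> i" "i \<le> nn" for i
  proof (cases "i = Suc (Suc j)")
    case True
    then have "s (ak K i) = x" using F1[OF i] by simp
    then show ?thesis unfolding gS using gy True i by simp
  next
    case False
    then have "s (ak K i) \<noteq> x" using F1[OF i] by simp
    moreover have "s (ak K i) \<noteq> y" by (simp add: y_def)
    ultimately show ?thesis unfolding gS using IA[OF i] False by auto
  qed
  have B: "gg K (Suc j) (t (ak K i)) = (if i \<le> Suc j then s (ak K i) else if i = nn then 0 else t (ak K (Suc i)))"
    if i: "1 \<le> i" "i \<le> nn" for i
  proof (cases "i = Suc j")
    case True
    then have "t (ak K i) = y" using F2[OF i] by simp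
    moreover have "t (ak K i) \<noteq> x" by (simp add: x_def)
    ultimately show ?thesis unfolding gS using gx True by simp
  next
    case False
    then have "t (ak K i) \<noteq> y" using F2[OF i] by simp
    moreover have "t (ak K i) \<noteq> x" by (simp add: x_def)
    ultimately show ?thesis unfolding gS using IB[OF i] False by auto
  qed
  have C: "gg K (Suc j) 0 = (if Suc j = nn then 0 else s (ak K nn))"
  proof (cases "Suc j = nn")
    case True
    then have "0 = x" using F3 by simp
    then show ?thesis unfolding gS using gy True by simp
  next
    case False
    then have "0 \<noteq> x" using F3 by simp
    moreover have "0 \<noteq> y" by (simp add: y_def)
    ultimately show ?thesis unfolding gS using IC False j by auto
  qed
  show ?case using A B C by blast
qed

end

end

context emb begin

context
  fixes K assumes lk: "long_knot K"
begin

lemma wfK': "wf_gd K" using lk by (simp add: long_knot_def)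
lemma wfKb: "wf_gd (Kb K)" using lk_Kb[OF lk] by (simp add: long_knot_def)
lemma wfG0: "wf_gd (G0 K)" unfolding G0_def by (rule wf_gl[OF wfKb wfK'])

lemma K0: "0 \<in> gpts K" using wf_parts(2)[OF wfK'] .

lemma G0_und_s: "gund (G0 K) (s z) = (if z \<in> gpts K then map_option s (gund K z) else None)"
  by (simp add: G0_def Kb_simps[OF lk])
lemma G0_und_t: "gund (G0 K) (t z) = (if z \<in> gpts K then map_option t (gund K z) else None)"
  by (simp add: G0_def)
lemma G0_pos_s: "z \<in> gpts K \<Longrightarrow> gpos (G0 K) (s z) = (\<not> gpos K z)"
  by (simp add: G0_def Kb_simps[OF lk])
lemma G0_pos_t: "gpos (G0 K) (t z) = gpos K z"
  by (simp add: G0_def)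
lemma G0_pts: "gpts (G0 K) = s ` gpts K \<union> t ` gpts K"
  by (simp add: G0_def gl_pts Kb_simps[OF lk])

lemma cob_G0_D1: "cob (G0 K) (D1 K) 0"
  unfolding D1_def
proof (rule cob_remove_plain[OF wfG0])
  note w = wf_parts[OF wfK']
  have "inv_into UNIV (gnxt K) (gnxt K 0) = 0" using permutes_inverses(2)[OF w(3)] by simp
  then show "gnxt (G0 K) (s (gnxt K 0)) = t 0" using w(7)[OF K0] by (simp add: G0_def Kb_simps[OF lk])
  show "t 0 \<in> gpts (G0 K)" using K0 by (simp add: G0_pts)
  show "t 0 \<noteq> 0" by simp
  show "t 0 \<noteq> s (gnxt K 0)" by simp
  have "gund K 0 = None" using w(4)[of 0] by (cases "gund K 0") auto
  then show "gund (G0 K) (t 0) = None" by (simp add: G0_und_t)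
  show "gund (G0 K) v \<noteq> Some (t 0)" for v
  proof (cases v rule: y_cases)
    case (S z) then show ?thesis by (cases "gund K z") (auto simp: G0_und_s)
  next
    case (T z) then show ?thesis using w(4)[of z 0] by (cases "gund K z") (auto simp: G0_und_t)
  next
    case O then show ?thesis using gl_other(2)[OF O] by (simp add: G0_def)
  qed
qed

lemma wfD1: "wf_gd (D1 K)" using cob_wf[OF cob_G0_D1] by blast

lemma D1_pts: "gpts (D1 K) = gpts (G0 K) - {t 0}" by (simp add: D1_def)

lemma HH_0: "HH K 0 = D1 K" by (simp add: HH_def)

lemma cob_saddles: "j \<le> nn K \<Longrightarrow> cob (D1 K) (HH K j) (- int j)"
proof (induction j)
  case 0 then show ?case using cob_refl[OF wfD1] by (simp add: HH_0)
next
  case (Suc j)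
  then have j: "Suc j \<le> nn K" by simp
  have c: "cob (D1 K) (HH K j) (- int j)" using Suc by simp
  have w: "wf_gd (HH K j)" using cob_wf[OF c] by blast
  have x: "s (ak K (Suc (Suc j))) \<in> gpts (HH K j)"
    using akin[OF lk] by (simp add: HH_def D1_pts G0_pts)
  have "ak K (Suc j) \<noteq> 0" using ak_nz[OF lk, of "Suc j"] j by simp
  then have y: "t (ak K (Suc j)) \<in> gpts (HH K j)"
    using akin[OF lk] by (simp add: HH_def D1_pts G0_pts)
  have "cob (HH K j) ((HH K j)\<lparr>gnxt := gnxt (HH K j) \<circ> Transposition.transpose (s (ak K (Suc (Suc j)))) (t (ak K (Suc j)))\<rparr>) (-1)"
    by (rule cob_saddle_step[OF w x y]) simp
  moreover have "(HH K j)\<lparr>gnxt := gnxt (HH K j) \<circ> Transposition.transpose (s (ak K (Suc (Suc j)))) (t (ak K (Suc j)))\<rparr> = HH K (Suc j)"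
    by (simp add: HH_def)
  ultimately have "cob (HH K j) (HH K (Suc j)) (-1)" by simp
  from cob_trans[OF this c] show ?case by (simp add: algebra_simps)
qed

lemma gg_final:
  assumes z: "z \<in> gpts K" "z \<noteq> 0"
  shows "gg K (nn K) (s z) = t z" "gg K (nn K) (t z) = s z"
proof -
  obtain i where i: "i < per K" "ak K i = z" using ak_surj[OF lk z(1)] by blast
  have i1: "1 \<le> i" using i z ak_0[OF lk] by (cases i) auto
  have i2: "i \<le> nn K" using i by simp
  from gg_inv[OF lk, of "nn K"] i1 i2 i(2)
  show "gg K (nn K) (s z) = t z" "gg K (nn K) (t z) = s z" by auto
qed

lemma gg_final0: "gg K (nn K) 0 = 0"
  using gg_inv[OF lk, of "nn K"] by simp

end

end

context emb begin

definition RR :: "gdiag \<Rightarrow> nat set \<Rightarrow> gdiag" where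
  "RR K U = (HH K (nn K))\<lparr>gund := \<lambda>v. if v \<in> s ` U \<union> t ` U then None else gund (G0 K) v\<rparr>"

definition QQ :: "gdiag \<Rightarrow> nat set \<Rightarrow> gdiag" where
  "QQ K V = (RR K (dom (gund K)))\<lparr>gpts := gpts (D1 K) - s ` V - t ` V,
     gnxt := \<lambda>v. if v \<in> s ` V \<union> t ` V then v else gg K (nn K) v\<rparr>"

context
  fixes K assumes lk: "long_knot K"
begin

lemma HH_simps: "gund (HH K j) = gund (G0 K)" "gnxt (HH K j) = gg K j" "gpos (HH K j) = gpos (G0 K)"
  "gpts (HH K j) = gpts (D1 K)"
  by (simp_all add: HH_def D1_def)

lemma wfHH: "wf_gd (HH K (nn K))" using cob_wf[OF cob_saddles[OF lk, of "nn K"]] by simp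

lemma RR_empty: "RR K {} = HH K (nn K)"
  by (simp add: RR_def HH_simps[symmetric])

lemma wfRR: "wf_gd (RR K U)"
  unfolding RR_def by (rule wf_und_sub[OF wfHH]) (simp add: HH_simps)

lemma R_step:
  assumes c: "c \<in> dom (gund K)" and cU: "c \<notin> U"
  shows "cob (RR K U) (RR K (insert c U)) 0"
proof -
  obtain d where d: "gund K c = Some d" using c by auto
  note w = wf_parts[OF wfK'[OF lk]]
  have h: "c \<in> gpts K" "c \<noteq> 0" "d \<in> gpts K" "d \<noteq> 0" using w(4)[OF d] by auto
  have "gd_R2 (RR K U) (RR K (insert c U))" unfolding gd_R2_def
  proof (intro exI conjI)
    show "gund (RR K U) (s c) = Some (s d)" using cU h d by (simp add: RR_def G0_und_s[OF lk])
    show "gund (RR K U) (t c) = Some (t d)" using cU h d by (simp add: RR_def G0_und_t[OF lk])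
    show "gnxt (RR K U) (s c) = t c" using gg_final[OF lk h(1,2)] by (simp add: RR_def HH_simps)
    show "gnxt (RR K U) (s d) = t d \<or> gnxt (RR K U) (t d) = s d"
      using gg_final[OF lk h(3,4)] by (simp add: RR_def HH_simps)
    show "gpos (RR K U) (s c) \<noteq> gpos (RR K U) (t c)"
      using h by (simp add: RR_def HH_simps G0_pos_s[OF lk] G0_pos_t[OF lk])
    show "RR K (insert c U) = (RR K U)\<lparr>gund := (gund (RR K U))(s c := None, t c := None)\<rparr>"
      by (auto simp: RR_def fun_eq_iff)
  qed
  then show ?thesis using cob_one_move[OF wfRR wfRR] rmove_def by blast
qed

lemma R_all: "finite U \<Longrightarrow> U \<subseteq> dom (gund K) \<Longrightarrow> cob (HH K (nn K)) (RR K U) 0"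
proof (induction U rule: finite_induct)
  case empty then show ?case using cob_refl[OF wfHH] by (simp add: RR_empty)
next
  case (insert c U)
  then have "cob (HH K (nn K)) (RR K U) 0" by simp
  moreover have "cob (RR K U) (RR K (insert c U)) 0" using R_step insert by blast
  ultimately show ?case using cob_trans by fastforce
qed

lemma dom_fin: "finite (dom (gund K))"
proof -
  have "dom (gund K) \<subseteq> gpts K" using wf_parts(4)[OF wfK'[OF lk]] by auto
  then show ?thesis using wf_parts(1)[OF wfK'[OF lk]] finite_subset by blast
qed

lemma RR_none: "gund (RR K (dom (gund K))) v = None"
proof (cases v rule: y_cases)
  case (S z) then show ?thesis by (auto simp: RR_def G0_und_s[OF lk])
next
  case (T z) then show ?thesis by (auto simp: RR_def G0_und_t[OF lk])
next
  case O then show ?thesis using gl_other(2)[OF O] by (simp add: RR_def G0_def)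
qed

lemma RR_simps: "gpts (RR K U) = gpts (D1 K)" "gnxt (RR K U) = gg K (nn K)"
  by (simp_all add: RR_def HH_simps)

lemma QQ_empty: "QQ K {} = RR K (dom (gund K))"
  by (rule gdiag.equality) (simp_all add: QQ_def RR_simps)

lemma QQ_simps: "gund (QQ K V) v = None" "gpts (QQ K V) = gpts (D1 K) - s ` V - t ` V"
  "gnxt (QQ K V) = (\<lambda>v. if v \<in> s ` V \<union> t ` V then v else gg K (nn K) v)"
  using RR_none by (simp_all add: QQ_def)

lemma D1_pts': "gpts (D1 K) = s ` gpts K \<union> t ` gpts K - {t 0}"
  by (simp add: D1_pts[OF lk] G0_pts[OF lk])

lemma Q_step:
  assumes z: "z \<in> gpts K" "z \<noteq> 0" and zV: "z \<notin> V" and wE: "wf_gd (QQ K V)"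
  shows "cob (QQ K V) (QQ K (insert z V)) 1"
proof -
  let ?E = "QQ K V"
  have gs: "gnxt ?E (s z) = t z" using zV gg_final[OF lk z] by (simp add: QQ_simps)
  have gt: "gnxt ?E (t z) = s z" using zV gg_final[OF lk z] by (simp add: QQ_simps)
  have tin: "t z \<in> gpts ?E" using z zV by (simp add: QQ_simps D1_pts')
  have c1: "cob ?E (?E\<lparr>gpts := gpts ?E - {t z}, gnxt := (gnxt ?E)(s z := gnxt ?E (t z), t z := t z)\<rparr>) 0"
    by (rule cob_remove_plain[OF wE gs tin]) (simp_all add: QQ_simps)
  define Y where "Y = ?E\<lparr>gpts := gpts ?E - {t z}, gnxt := (gnxt ?E)(s z := gnxt ?E (t z), t z := t z)\<rparr>"
  have wY: "wf_gd Y" using cob_wf[OF c1] by (simp add: Y_def)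
  have sin: "s z \<in> gpts Y" using z zV by (simp add: Y_def QQ_simps D1_pts')
  have fx: "gnxt Y (s z) = s z" using gt by (simp add: Y_def)
  have c2: "cob Y (Y\<lparr>gpts := gpts Y - {s z}\<rparr>) 1"
    by (rule cob_remove_fixed[OF wY sin _ fx]) (use z in \<open>simp_all add: Y_def QQ_simps\<close>)
  have eq: "Y\<lparr>gpts := gpts Y - {s z}\<rparr> = QQ K (insert z V)"
  proof (rule gdiag.equality)
    show "gpts (Y\<lparr>gpts := gpts Y - {s z}\<rparr>) = gpts (QQ K (insert z V))"
      by (auto simp: Y_def QQ_simps)
    show "gnxt (Y\<lparr>gpts := gpts Y - {s z}\<rparr>) = gnxt (QQ K (insert z V))"
      using gt by (auto simp: Y_def QQ_simps fun_eq_iff)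
  qed (simp_all add: Y_def QQ_def)
  have c1': "cob ?E Y 0" using c1 by (simp add: Y_def)
  show ?thesis using cob_trans[OF c2 c1'] eq by simp
qed

lemma Q_all: "finite V \<Longrightarrow> V \<subseteq> gpts K - {0} \<Longrightarrow> cob (RR K (dom (gund K))) (QQ K V) (int (card V))"
proof (induction V rule: finite_induct)
  case empty then show ?case using cob_refl[OF wfRR] by (simp add: QQ_empty)
next
  case (insert z V)
  then have c: "cob (RR K (dom (gund K))) (QQ K V) (int (card V))" by simp
  have w: "wf_gd (QQ K V)" using cob_wf[OF c] by blast
  have "cob (QQ K V) (QQ K (insert z V)) 1" using Q_step[OF _ _ _ w] insert by blast
  from cob_trans[OF this c] show ?case using insert by (simp add: add.commute)
qed

lemma Q_final: "cob (QQ K (gpts K - {0})) triv_long 0"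
proof -
  let ?Q = "QQ K (gpts K - {0})"
  have c: "cob (RR K (dom (gund K))) ?Q (int (card (gpts K - {0})))"
    using Q_all wf_parts(1)[OF wfK'[OF lk]] by blast
  have w: "wf_gd ?Q" using cob_wf[OF c] by blast
  have p: "gpts ?Q = {0}"
  proof -
    have "gpts ?Q = (s ` gpts K \<union> t ` gpts K - {t 0}) - s ` (gpts K - {0}) - t ` (gpts K - {0})"
      by (simp add: QQ_simps D1_pts')
    also have "\<dots> = {0}" using K0[OF lk] by (auto simp: image_iff)
    finally show ?thesis .
  qed
  have n0: "gnxt ?Q 0 = 0" using gg_final0[OF lk] by (auto simp: QQ_simps)
  have "gd_iso ?Q triv_long"
  proof (rule iso_id)
    show "gpts ?Q = gpts triv_long" using p by (simp add: triv_long_def)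
  next
    fix x assume "x \<in> gpts ?Q"
    then have x: "x = 0" using p by simp
    show "gnxt triv_long x = gnxt ?Q x" using n0 x by (simp add: triv_long_def)
  next
    fix x show "gund triv_long x = gund ?Q x" by (simp add: triv_long_def QQ_simps)
  next
    fix x assume "gund ?Q x \<noteq> None" then show "gpos triv_long x = gpos ?Q x" by (simp add: QQ_simps)
  qed
  then show ?thesis using cob_one_move[OF w wf_triv] rmove_def by blast
qed

lemma G0_triv: "cob (G0 K) triv_long 0"
proof -
  have c1: "cob (G0 K) (D1 K) 0" by (rule cob_G0_D1[OF lk])
  have c2: "cob (D1 K) (HH K (nn K)) (- int (nn K))" by (rule cob_saddles[OF lk]) simp
  have c3: "cob (HH K (nn K)) (RR K (dom (gund K))) 0" by (rule R_all[OF dom_fin]) simp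
  have cd: "card (gpts K - {0}) = nn K" using card_per[OF lk] K0[OF lk] wf_parts(1)[OF wfK'[OF lk]]
    by simp
  have c4: "cob (RR K (dom (gund K))) (QQ K (gpts K - {0})) (int (nn K))"
    using Q_all[of "gpts K - {0}"] wf_parts(1)[OF wfK'[OF lk]] cd by simp
  have "cob (G0 K) triv_long (0 + - int (nn K) + 0 + int (nn K) + 0)"
    using cob_trans[OF Q_final cob_trans[OF c4 cob_trans[OF c3 cob_trans[OF c2 c1]]]] .
  then show ?thesis by simp
qed

end

end

lemma inverse_conc: "long_knot K \<Longrightarrow> concordant (lk_concat (Kb K) K) triv_long"
proof -
  assume lk: "long_knot K"
  have wK: "wf_gd K" using lk by (simp add: long_knot_def)
  have wKb: "wf_gd (Kb K)" using lk_Kb[OF lk] by (simp add: long_knot_def)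
  have "cob (lk_concat (Kb K) K) (e2.gl (Kb K) K) 0" using concat_cob_gl[OF wKb wK] .
  from cob_trans[OF e2.G0_triv[OF lk, unfolded e2.G0_def] this]
  show ?thesis unfolding concordant_def using concat_lk[OF lk_Kb[OF lk] lk] lk_triv by simp
qed

lemma cls_eq: "long_knot a \<Longrightarrow> long_knot b \<Longrightarrow> conc_rel `` {a} = conc_rel `` {b} \<longleftrightarrow> concordant a b"
  using eq_equiv_class_iff[OF equiv_conc] by (simp add: conc_rel_def)

lemma cls_mem: "long_knot a \<Longrightarrow> conc_rel `` {a} \<in> VC"
  unfolding VC_def by (rule quotientI) simp

lemma VC_cases: "X \<in> VC \<Longrightarrow> (\<And>a. long_knot a \<Longrightarrow> X = conc_rel `` {a} \<Longrightarrow> P) \<Longrightarrow> P"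
  unfolding VC_def by (erule quotientE) simp

lemma in_cls: "b \<in> conc_rel `` {a} \<longleftrightarrow> concordant a b"
  by (simp add: conc_rel_def)

lemma conc_sym: "concordant a b \<Longrightarrow> concordant b a"
  using cob_sym by (simp add: concordant_def)

lemma conc_refl: "long_knot a \<Longrightarrow> concordant a a"
  using cob_refl by (simp add: concordant_def long_knot_def)

lemma vc_mult_cls:
  assumes a: "long_knot a" and b: "long_knot b"
  shows "vc_mult (conc_rel `` {a}) (conc_rel `` {b}) = conc_rel `` {lk_concat a b}"
proof -
  have lab: "long_knot (lk_concat a b)" using concat_lk[OF a b] .
  have eq: "conc_rel `` {lk_concat a' b'} = conc_rel `` {lk_concat a b}"
    if "a' \<in> conc_rel `` {a}" "b' \<in> conc_rel `` {b}" for a' b'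
  proof -
    have "concordant a a'" "concordant b b'" using that by (simp_all add: conc_rel_def)
    then have c: "concordant (lk_concat a' b') (lk_concat a b)" using concat_conc conc_sym by blast
    then have "long_knot (lk_concat a' b')" by (simp add: concordant_def)
    then show ?thesis using cls_eq c lab by blast
  qed
  have "a \<in> conc_rel `` {a}" "b \<in> conc_rel `` {b}" using conc_refl a b by (simp_all add: conc_rel_def)
  then show ?thesis unfolding vc_mult_def using eq by blast
qed

theorem theorem1:
  shows "equiv {K. long_knot K} conc_rel \<and> group VC_group"
proof
  show "equiv {K. long_knot K} conc_rel" by (rule equiv_conc)
  show "group VC_group"
  proof (rule groupI)
    fix x y assume "x \<in> carrier VC_group" "y \<in> carrier VC_group"
    then show "x \<otimes>\<^bsub>VC_group\<^esub> y \<in> carrier VC_group"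
      by (auto simp: VC_group_def elim!: VC_cases simp: vc_mult_cls concat_lk cls_mem)
  next
    show "\<one>\<^bsub>VC_group\<^esub> \<in> carrier VC_group" by (simp add: VC_group_def cls_mem lk_triv)
  next
    fix x y z assume "x \<in> carrier VC_group" "y \<in> carrier VC_group" "z \<in> carrier VC_group"
    then obtain a b c where a: "long_knot a" "x = conc_rel `` {a}" and b: "long_knot b" "y = conc_rel `` {b}"
      and c: "long_knot c" "z = conc_rel `` {c}"
      by (auto simp: VC_group_def elim!: VC_cases)
    have "conc_rel `` {lk_concat (lk_concat a b) c} = conc_rel `` {lk_concat a (lk_concat b c)}"
      using cls_eq concat_assoc concat_lk a b c by metis
    then show "x \<otimes>\<^bsub>VC_group\<^esub> y \<otimes>\<^bsub>VC_group\<^esub> z = x \<otimes>\<^bsub>VC_group\<^esub> (y \<otimes>\<^bsub>VC_group\<^esub> z)"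
      using a b c by (simp add: VC_group_def vc_mult_cls concat_lk)
  next
    fix x assume "x \<in> carrier VC_group"
    then obtain a where a: "long_knot a" "x = conc_rel `` {a}" by (auto simp: VC_group_def elim!: VC_cases)
    have "conc_rel `` {lk_concat triv_long a} = conc_rel `` {a}"
      using cls_eq concat_left_id concat_lk lk_triv a by metis
    then show "\<one>\<^bsub>VC_group\<^esub> \<otimes>\<^bsub>VC_group\<^esub> x = x"
      using a by (simp add: VC_group_def vc_mult_cls lk_triv)
  next
    fix x assume "x \<in> carrier VC_group"
    then obtain a where a: "long_knot a" "x = conc_rel `` {a}" by (auto simp: VC_group_def elim!: VC_cases)
    have lb: "long_knot (Kb a)" using lk_Kb[OF a(1)] .
    have "conc_rel `` {lk_concat (Kb a) a} = conc_rel `` {triv_long}"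
      using cls_eq inverse_conc concat_lk lk_triv a lb by metis
    then have "conc_rel `` {Kb a} \<otimes>\<^bsub>VC_group\<^esub> x = \<one>\<^bsub>VC_group\<^esub>"
      using a lb by (simp add: VC_group_def vc_mult_cls)
    moreover have "conc_rel `` {Kb a} \<in> carrier VC_group" using lb by (simp add: VC_group_def cls_mem)
    ultimately show "\<exists>y\<in>carrier VC_group. y \<otimes>\<^bsub>VC_group\<^esub> x = \<one>\<^bsub>VC_group\<^esub>" by blast
  qed
qed

end
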